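(* Consider the generalized trimmed lasso problem $\min_{x_0,\ldots,x_L} f(x_0,\ldots,x_L)+\sum_{l=1}^L\gamma_lT_{K_l,m_l,p_l}(D_lx_l-c_l)$, and suppose that for each $l\in[L]$ a point $\overline{x}_l$ with $D_l\overline{x}_l=c_l$ is given. (a) If $f(x_0,\ldots,x_L)=\frac12\|b-\sum_{l=0}^LA_lx_l\|_2^2$ with $b\in\mathbb{R}^q$, $A_l\in\mathbb{R}^{q\times n_l}$, then every d-stationary point $(x_0^*,\ldots,x_L^* )$ satisfies $T_{K_l,m_l,p_l}(D_lx_l^*-c_l)=0$ for all $l\in[L]$ provided that for all $l\in[L]$ $$\gamma_l>\frac{1}{\sigma_{K_l,m_l,p_l}(D_l)}\|A_l\|_2\Big\|b-\sum_{k=1}^LA_k\overline{x}_k\Big\|_2.$$ (b) If $n_0=0$, $p_l=1$, $D_l=I$, $c_l=0$ for all $l$, and $f(x_1,\ldots,x_L)=\frac12\|b-\sum_{l=1}^LA_lx_l\|_2^2+\sum_{l=1}^L\eta_l\|x_l\|_1$ with $b\in\mathbb{R}^q$, $A_l\in\mathbb{R}^{q\times n_l}$, $\eta_l\ge0$, then every d-stationary point $(x_1^*,\ldots,x_L^* )$ satisfies $T_{K_l,n_l,1}(x_l^* )=0$ for all $l$ provided $\gamma_l>\max_{j\in[n_l]}\|a_j^{(l)}\|_2\|b\|_2-\eta_l$ for all $l$, where $a_j^{(l)}$ is the $j$-th column of $A_l$.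
   Context: Trimmed $\ell_1$ norm: $T_{K,m,p}(z)=\min_{\Lambda\subset[m],|\Lambda|=m-K}\sum_{i\in\Lambda}\|z_i\|_2$ for $z=(z_1^\top,\ldots,z_m^\top)^\top$, $z_i\in\mathbb{R}^p$, $K\in\{0,\ldots,m-1\}$. Data: $n_0\ge0$, $\gamma_l>0$, $K_l\in\{0,\ldots,m_l-1\}$, $c_l\in\mathbb{R}^{m_lp_l}$, $D_l\ne0$ an $m_lp_l\times n_l$ matrix. $\|A\|_2$ is the spectral norm (largest singular value). d-stationary: directional derivative of the objective at the point is $\ge0$ in every direction. $\sigma_{\min}(A)$ = smallest nonzero singular value. For $D$ with $p\times n$ blocks and $(D)_\Lambda$ the submatrix of blocks indexed by $\Lambda$: $\sigma_{K,m,p}(D)=\sigma_{\min}(D)$ if $D$ is surjective, else $\min\{\sigma_{\min}((D)_\Lambda)\mid \Lambda\subset[m],|\Lambda|=m-K,(D)_\Lambda\ne0\}$. *)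

theory Defs
  imports "HOL-Analysis.Analysis"
begin

text \<open>Vectors of R^n are represented as functions nat => real, only the entries
  with index < n being relevant; matrices as nat => nat => real (row, column).
  Indices are 0-based.\<close>

definition vnorm2 :: "nat \<Rightarrow> (nat \<Rightarrow> real) \<Rightarrow> real" where
  "vnorm2 n v = sqrt (\<Sum>i<n. (v i)\<^sup>2)"

definition vnorm1 :: "nat \<Rightarrow> (nat \<Rightarrow> real) \<Rightarrow> real" where
  "vnorm1 n v = (\<Sum>i<n. \<bar>v i\<bar>)"

definition mv :: "(nat \<Rightarrow> nat \<Rightarrow> real) \<Rightarrow> nat \<Rightarrow> (nat \<Rightarrow> real) \<Rightarrow> nat \<Rightarrow> real" where
  "mv A n x = (\<lambda>i. \<Sum>j<n. A i j * x j)"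

definition block_norm :: "nat \<Rightarrow> (nat \<Rightarrow> real) \<Rightarrow> nat \<Rightarrow> real" where
  "block_norm p z i = sqrt (\<Sum>r<p. (z (i * p + r))\<^sup>2)"

definition trimmed :: "nat \<Rightarrow> nat \<Rightarrow> nat \<Rightarrow> (nat \<Rightarrow> real) \<Rightarrow> real" where
  "trimmed K m p z = Min ((\<lambda>\<Lambda>. \<Sum>i\<in>\<Lambda>. block_norm p z i) ` {\<Lambda>. \<Lambda> \<subseteq> {..<m} \<and> card \<Lambda> = m - K})"

text \<open>Singular values of the matrix consisting of the rows R (a finite index set)
  and the columns 0..n-1 of A: the s >= 0 such that s^2 is an eigenvalue of A^T A.\<close>
definition gram :: "nat set \<Rightarrow> (nat \<Rightarrow> nat \<Rightarrow> real) \<Rightarrow> nat \<Rightarrow> nat \<Rightarrow> real" where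
  "gram R A i j = (\<Sum>r\<in>R. A r i * A r j)"

definition is_singular_value :: "nat set \<Rightarrow> nat \<Rightarrow> (nat \<Rightarrow> nat \<Rightarrow> real) \<Rightarrow> real \<Rightarrow> bool" where
  "is_singular_value R n A s \<longleftrightarrow> s \<ge> 0 \<and>
     (\<exists>v. (\<exists>j<n. v j \<noteq> 0) \<and> (\<forall>i<n. (\<Sum>j<n. gram R A i j * v j) = s\<^sup>2 * v i))"

definition spec_norm :: "nat set \<Rightarrow> nat \<Rightarrow> (nat \<Rightarrow> nat \<Rightarrow> real) \<Rightarrow> real" where
  "spec_norm R n A = Max {s. is_singular_value R n A s}"

definition sigma_min :: "nat set \<Rightarrow> nat \<Rightarrow> (nat \<Rightarrow> nat \<Rightarrow> real) \<Rightarrow> real" where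
  "sigma_min R n A = Min {s. is_singular_value R n A s \<and> s > 0}"

definition surjective_mat :: "nat set \<Rightarrow> nat \<Rightarrow> (nat \<Rightarrow> nat \<Rightarrow> real) \<Rightarrow> bool" where
  "surjective_mat R n A \<longleftrightarrow> (\<forall>y. \<exists>x. \<forall>r\<in>R. mv A n x r = y r)"

definition mat_nonzero :: "nat set \<Rightarrow> nat \<Rightarrow> (nat \<Rightarrow> nat \<Rightarrow> real) \<Rightarrow> bool" where
  "mat_nonzero R n A \<longleftrightarrow> (\<exists>r\<in>R. \<exists>j<n. A r j \<noteq> 0)"

definition block_rows :: "nat \<Rightarrow> nat set \<Rightarrow> nat set" where
  "block_rows p \<Lambda> = {i * p + r | i r. i \<in> \<Lambda> \<and> r < p}"

definition sigmaK :: "nat \<Rightarrow> nat \<Rightarrow> nat \<Rightarrow> nat \<Rightarrow> (nat \<Rightarrow> nat \<Rightarrow> real) \<Rightarrow> real" where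
  "sigmaK K m p n D =
     (if surjective_mat {..<m * p} n D then sigma_min {..<m * p} n D
      else Min {sigma_min (block_rows p \<Lambda>) n D | \<Lambda>.
                  \<Lambda> \<subseteq> {..<m} \<and> card \<Lambda> = m - K \<and> mat_nonzero (block_rows p \<Lambda>) n D})"

definition d_stationary :: "((nat \<Rightarrow> nat \<Rightarrow> real) \<Rightarrow> real) \<Rightarrow> (nat \<Rightarrow> nat \<Rightarrow> real) \<Rightarrow> bool" where
  "d_stationary F x \<longleftrightarrow>
     (\<forall>d. \<exists>D. ((\<lambda>t. (F (\<lambda>l j. x l j + t * d l j) - F x) / t) \<longlongrightarrow> D) (at_right 0) \<and> D \<ge> 0)"

end

theory Submission
  imports Defs "Jordan_Normal_Form.Determinant"
begin

lemma ext_subseq: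
  fixes X :: "nat \<Rightarrow> nat \<Rightarrow> real"
  assumes B: "\<And>m i. \<bar>X m i\<bar> \<le> B"
  shows "\<exists>r. strict_mono r \<and> (\<forall>i<n. convergent (\<lambda>m. X (r m) i))"
proof (induction n)
  case 0
  then show ?case by (rule exI[of _ id]) (auto simp: strict_mono_def)
next
  case (Suc n)
  then obtain r where r: "strict_mono r" "\<forall>i<n. convergent (\<lambda>m. X (r m) i)" by blast
  obtain s where s: "strict_mono s" "monoseq (\<lambda>m. X (r (s m)) n)"
    using seq_monosub[of "\<lambda>m. X (r m) n"] by blast
  have "Bseq (\<lambda>m. X (r (s m)) n)"
    using B by (intro BseqI'[of _ B]) auto
  hence cn: "convergent (\<lambda>m. X (r (s m)) n)" using Bseq_monoseq_convergent s(2) by blast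
  have "\<forall>i<Suc n. convergent (\<lambda>m. X ((r \<circ> s) m) i)"
  proof (intro allI impI)
    fix i assume "i < Suc n"
    show "convergent (\<lambda>m. X ((r \<circ> s) m) i)"
    proof (cases "i = n")
      case True thus ?thesis using cn by simp
    next
      case False
      hence "convergent (\<lambda>m. X (r m) i)" using r(2) \<open>i < Suc n\<close> by simp
      from convergent_subseq_convergent[OF this s(1)] show ?thesis by (simp add: o_def)
    qed
  qed
  moreover have "strict_mono (r \<circ> s)" using r(1) s(1) by (rule strict_mono_o)
  ultimately show ?case by blast
qed

definition ip :: "nat \<Rightarrow> (nat \<Rightarrow> real) \<Rightarrow> (nat \<Rightarrow> real) \<Rightarrow> real" where
  "ip n u v = (\<Sum>i<n. u i * v i)"

definition symm :: "nat \<Rightarrow> (nat \<Rightarrow> nat \<Rightarrow> real) \<Rightarrow> bool" where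
  "symm n G \<longleftrightarrow> (\<forall>i<n. \<forall>j<n. G i j = G j i)"

lemma ip_comm: "ip n a b = ip n b a"
  unfolding ip_def by (simp add: mult.commute)

lemma ip_add1: "ip n (\<lambda>i. a i + b i) c = ip n a c + ip n b c"
  unfolding ip_def by (simp add: distrib_right sum.distrib)

lemma ip_add2: "ip n c (\<lambda>i. a i + b i) = ip n c a + ip n c b"
  unfolding ip_def by (simp add: distrib_left sum.distrib)

lemma ip_diff1: "ip n (\<lambda>i. a i - b i) c = ip n a c - ip n b c"
  unfolding ip_def by (simp add: left_diff_distrib sum_subtractf)

lemma ip_diff2: "ip n c (\<lambda>i. a i - b i) = ip n c a - ip n c b"
  unfolding ip_def by (simp add: right_diff_distrib sum_subtractf)

lemma ip_scale1: "ip n (\<lambda>i. t * a i) c = t * ip n a c"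
  unfolding ip_def by (simp add: sum_distrib_left mult.assoc)

lemma ip_scale2: "ip n c (\<lambda>i. t * a i) = t * ip n c a"
  unfolding ip_def by (simp add: sum_distrib_left mult.left_commute)

lemma ip_cong: "(\<And>i. i < n \<Longrightarrow> a i = a' i) \<Longrightarrow> (\<And>i. i < n \<Longrightarrow> b i = b' i) \<Longrightarrow> ip n a b = ip n a' b'"
  unfolding ip_def by (auto intro!: sum.cong)

lemma ip_self_nonneg: "ip n a a \<ge> 0"
  unfolding ip_def by (auto intro!: sum_nonneg)

lemma ip_self_zero: "ip n a a = 0 \<Longrightarrow> i < n \<Longrightarrow> a i = 0"
  unfolding ip_def by (subst (asm) sum_nonneg_eq_0_iff) auto

lemma mv_add: "mv G n (\<lambda>i. a i + b i) = (\<lambda>i. mv G n a i + mv G n b i)"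
  unfolding mv_def by (simp add: distrib_left sum.distrib)

lemma mv_diff: "mv G n (\<lambda>i. a i - b i) = (\<lambda>i. mv G n a i - mv G n b i)"
  unfolding mv_def by (simp add: right_diff_distrib sum_subtractf)

lemma mv_scale: "mv G n (\<lambda>i. t * a i) = (\<lambda>i. t * mv G n a i)"
  unfolding mv_def by (simp add: sum_distrib_left mult.left_commute)

lemma mv_cong: "(\<And>i. i < n \<Longrightarrow> a i = a' i) \<Longrightarrow> mv G n a = mv G n a'"
  unfolding mv_def by (auto intro!: sum.cong)

lemma ip_mv_sym:
  assumes "symm n G"
  shows "ip n u (mv G n v) = ip n (mv G n u) v"
proof -
  have "ip n u (mv G n v) = (\<Sum>i<n. \<Sum>j<n. u i * G i j * v j)"
    unfolding ip_def mv_def by (simp add: sum_distrib_left mult.assoc)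
  also have "\<dots> = (\<Sum>j<n. \<Sum>i<n. u i * G i j * v j)" by (rule sum.swap)
  also have "\<dots> = (\<Sum>j<n. \<Sum>i<n. G j i * u i * v j)"
    using assms unfolding symm_def by (intro sum.cong refl) (auto simp: mult.commute)
  also have "\<dots> = ip n (mv G n u) v"
    unfolding ip_def mv_def by (simp add: sum_distrib_right)
  finally show ?thesis .
qed

lemma quad_bound:
  assumes "\<And>i. i < n \<Longrightarrow> \<bar>v i\<bar> \<le> 1"
  shows "\<bar>ip n v (mv G n v)\<bar> \<le> (\<Sum>i<n. \<Sum>j<n. \<bar>G i j\<bar>)"
proof -
  have "\<bar>ip n v (mv G n v)\<bar> = \<bar>\<Sum>i<n. \<Sum>j<n. v i * G i j * v j\<bar>"
    unfolding ip_def mv_def by (simp add: sum_distrib_left mult.assoc)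
  also have "\<dots> \<le> (\<Sum>i<n. \<bar>\<Sum>j<n. v i * G i j * v j\<bar>)" by (rule sum_abs)
  also have "\<dots> \<le> (\<Sum>i<n. \<Sum>j<n. \<bar>v i * G i j * v j\<bar>)" by (intro sum_mono sum_abs)
  also have "\<dots> \<le> (\<Sum>i<n. \<Sum>j<n. \<bar>G i j\<bar>)"
  proof (intro sum_mono)
    fix i j assume i: "i \<in> {..<n}" and j: "j \<in> {..<n}"
    have "\<bar>v i * G i j * v j\<bar> = \<bar>G i j\<bar> * (\<bar>v i\<bar> * \<bar>v j\<bar>)" by (simp add: abs_mult)
    also have "\<dots> \<le> \<bar>G i j\<bar> * 1"
      using assms i j by (intro mult_left_mono) (auto intro: mult_le_one)
    finally show "\<bar>v i * G i j * v j\<bar> \<le> \<bar>G i j\<bar>" by simp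
  qed
  finally show ?thesis .
qed

lemma unit_coord_bound:
  assumes "ip n v v = 1" "i < n" shows "\<bar>v i\<bar> \<le> 1"
proof -
  have "(v i)\<^sup>2 \<le> (\<Sum>j<n. (v j)\<^sup>2)"
    using assms(2) by (intro member_le_sum) auto
  also have "\<dots> = 1" using assms(1) unfolding ip_def by (simp add: power2_eq_square)
  finally show ?thesis using power2_le_iff_abs_le[of 1 "v i"] by simp
qed

lemma quad_zero:
  fixes S B :: real
  assumes "\<And>t. 2 * t * S + t\<^sup>2 * B \<le> 0" "S \<ge> 0"
  shows "S = 0"
proof (rule ccontr)
  assume "S \<noteq> 0" hence S: "S > 0" using assms(2) by simp
  define t where "t = S / (\<bar>B\<bar> + 1)"
  have t: "t > 0" using S by (simp add: t_def add_pos_nonneg)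
  have "t * \<bar>B\<bar> < S" using S unfolding t_def by (simp add: field_simps add_pos_nonneg)
  hence "t * (t * \<bar>B\<bar>) < t * S" using t by simp
  hence "t\<^sup>2 * \<bar>B\<bar> < 2 * t * S" using t S by (simp add: power2_eq_square algebra_simps)
  moreover have "- (t\<^sup>2 * \<bar>B\<bar>) \<le> t\<^sup>2 * B"
    using mult_left_mono[of "-\<bar>B\<bar>" B "t\<^sup>2"] by simp
  ultimately have "2 * t * S + t\<^sup>2 * B > 0" by linarith
  with assms(1)[of t] show False by simp
qed

lemma max_eig:
  fixes G U :: "nat \<Rightarrow> nat \<Rightarrow> real"
  assumes sym: "symm n G"
    and eig: "\<forall>a<k. \<forall>i<n. mv G n (U a) i = lam a * U a i"
    and w: "ip n w w = 1" "\<forall>a<k. ip n w (U a) = 0"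
  shows "\<exists>u \<mu>. ip n u u = 1 \<and> (\<forall>a<k. ip n u (U a) = 0) \<and> (\<forall>i<n. mv G n u i = \<mu> * u i)"
proof -
  define f where "f v = ip n v (mv G n v)" for v
  define P where "P v \<longleftrightarrow> ip n v v = 1 \<and> (\<forall>a<k. ip n v (U a) = 0) \<and> (\<forall>i\<ge>n. v i = 0)" for v
  define Bd where "Bd = (\<Sum>i<n. \<Sum>j<n. \<bar>G i j\<bar>)"
  define w' where "w' i = (if i < n then w i else 0)" for i
  have "ip n w' w' = ip n w w" "\<And>a. ip n w' (U a) = ip n w (U a)"
    by (auto intro!: ip_cong simp: w'_def)
  hence Pw': "P w'" using w unfolding P_def by (auto simp: w'_def)
  have fbd: "f v \<le> Bd" if "P v" for v
  proof -
    have "\<bar>f v\<bar> \<le> Bd" unfolding f_def Bd_def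
      using that unit_coord_bound unfolding P_def by (intro quad_bound) blast
    thus ?thesis by simp
  qed
  define \<mu> where "\<mu> = Sup (f ` {v. P v})"
  have ne: "f ` {v. P v} \<noteq> {}" using Pw' by auto
  have bdd: "bdd_above (f ` {v. P v})" using fbd by (auto intro!: bdd_aboveI)
  have upper: "f v \<le> \<mu>" if "P v" for v
    unfolding \<mu>_def using bdd that by (intro cSup_upper) auto
  have "\<exists>v. P v \<and> \<mu> + - inverse (real (Suc m)) < f v" for m
  proof -
    have "\<mu> + - inverse (real (Suc m)) < \<mu>" by simp
    hence "\<mu> + - inverse (real (Suc m)) < Sup (f ` {v. P v})" unfolding \<mu>_def .
    then obtain y where "y \<in> f ` {v. P v}" "\<mu> + - inverse (real (Suc m)) < y"
      using less_cSup_iff[OF ne bdd] by blast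
    thus ?thesis by auto
  qed
  then obtain X where X: "\<And>m. P (X m)" "\<And>m. \<mu> + - inverse (real (Suc m)) < f (X m)" by metis
  have Xb: "\<bar>X m i\<bar> \<le> 1" for m i
  proof (cases "i < n")
    case True thus ?thesis using X(1)[of m] unit_coord_bound unfolding P_def by blast
  next
    case False thus ?thesis using X(1)[of m] unfolding P_def by simp
  qed
  obtain r where r: "strict_mono r" "\<forall>i<n. convergent (\<lambda>m. X (r m) i)"
    using ext_subseq[of X 1 n] Xb by blast
  define v where "v i = (if i < n then lim (\<lambda>m. X (r m) i) else 0)" for i
  have lim: "(\<lambda>m. X (r m) i) \<longlonglongrightarrow> v i" if "i < n" for i
    using r(2) that unfolding v_def by (simp add: convergent_LIMSEQ_iff)
  have t1: "(\<lambda>m. ip n (X (r m)) (X (r m))) \<longlonglongrightarrow> ip n v v"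
    unfolding ip_def by (intro tendsto_sum tendsto_mult lim) auto
  have t2: "(\<lambda>m. ip n (X (r m)) (U a)) \<longlonglongrightarrow> ip n v (U a)" for a
    unfolding ip_def by (intro tendsto_sum tendsto_mult lim tendsto_const) auto
  have t3: "(\<lambda>m. f (X (r m))) \<longlonglongrightarrow> f v"
    unfolding f_def ip_def mv_def by (intro tendsto_sum tendsto_mult lim tendsto_const) auto
  have "ip n v v = 1"
  proof -
    have "(\<lambda>m. ip n (X (r m)) (X (r m))) = (\<lambda>m. 1)" using X(1) unfolding P_def by auto
    with t1 show ?thesis using LIMSEQ_unique tendsto_const by metis
  qed
  moreover have "ip n v (U a) = 0" if "a < k" for a
  proof -
    have "(\<lambda>m. ip n (X (r m)) (U a)) = (\<lambda>m. 0)" using X(1) that unfolding P_def by auto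
    with t2[of a] show ?thesis using LIMSEQ_unique tendsto_const by metis
  qed
  ultimately have Pv: "P v" unfolding P_def by (auto simp: v_def)
  have fv: "f v = \<mu>"
  proof (rule antisym)
    show "f v \<le> \<mu>" using upper Pv .
    have "((\<lambda>m. \<mu> + - inverse (real (Suc m))) \<circ> r) \<longlonglongrightarrow> \<mu>"
      by (rule LIMSEQ_subseq_LIMSEQ[OF LIMSEQ_inverse_real_of_nat_add_minus r(1)])
    hence "(\<lambda>m. \<mu> + - inverse (real (Suc (r m)))) \<longlonglongrightarrow> \<mu>" by (simp add: o_def)
    thus "\<mu> \<le> f v"
      by (rule tendsto_le[OF trivial_limit_sequentially t3]) (use X(2) less_imp_le in \<open>auto intro!: always_eventually\<close>)
  qed
  have key: "f x \<le> \<mu> * ip n x x" if xo: "\<forall>a<k. ip n x (U a) = 0" for x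
  proof (cases "ip n x x = 0")
    case True
    hence "\<And>i. i < n \<Longrightarrow> x i = 0" using ip_self_zero by blast
    hence "f x = ip n (\<lambda>i. 0) (mv G n x)" unfolding f_def by (intro ip_cong) auto
    also have "\<dots> = 0" by (simp add: ip_def)
    finally show ?thesis using True by simp
  next
    case False
    define c where "c = sqrt (ip n x x)"
    have c: "c > 0" using False ip_self_nonneg[of n x] unfolding c_def by simp
    have cc: "c * c = ip n x x" unfolding c_def using ip_self_nonneg[of n x] by simp
    define s where "s = 1/c"
    define y where "y i = (if i < n then s * x i else 0)" for i
    have "ip n y y = ip n (\<lambda>i. s * x i) (\<lambda>i. s * x i)" by (intro ip_cong) (auto simp: y_def)
    also have "\<dots> = s * s * ip n x x" by (simp add: ip_scale1 ip_scale2)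
    also have "\<dots> = 1" using c cc False by (simp add: field_simps s_def)
    finally have yy: "ip n y y = 1" .
    have "ip n y (U a) = s * ip n x (U a)" for a
    proof -
      have "ip n y (U a) = ip n (\<lambda>i. s * x i) (U a)" by (intro ip_cong) (auto simp: y_def)
      thus ?thesis by (simp add: ip_scale1)
    qed
    hence "P y" using yy xo unfolding P_def by (auto simp: y_def)
    hence "f y \<le> \<mu>" by (rule upper)
    moreover have "f y = s * s * f x"
    proof -
      have "mv G n y = mv G n (\<lambda>i. s * x i)" by (intro mv_cong) (auto simp: y_def)
      hence "f y = ip n (\<lambda>i. s * x i) (\<lambda>i. s * mv G n x i)"
        unfolding f_def by (simp add: mv_scale) (intro ip_cong, auto simp: y_def)
      thus ?thesis unfolding f_def by (simp add: ip_scale1 ip_scale2)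
    qed
    ultimately have "s * s * f x \<le> \<mu>" by simp
    hence "f x \<le> \<mu> * (c * c)" using c by (simp add: field_simps s_def)
    thus ?thesis using cc by simp
  qed
  define g where "g i = mv G n v i - \<mu> * v i" for i
  have gorth: "ip n g (U a) = 0" if "a < k" for a
  proof -
    have "ip n g (U a) = ip n (mv G n v) (U a) - \<mu> * ip n v (U a)"
      unfolding g_def by (simp add: ip_diff1 ip_scale1)
    also have "ip n (mv G n v) (U a) = ip n v (mv G n (U a))" using ip_mv_sym[OF sym] by simp
    also have "\<dots> = ip n v (\<lambda>i. lam a * U a i)" using eig that by (intro ip_cong) auto
    also have "\<dots> = lam a * ip n v (U a)" by (simp add: ip_scale2)
    finally show ?thesis using Pv that unfolding P_def by simp
  qed
  have ineq: "2 * t * ip n g g + t\<^sup>2 * (f g - \<mu> * ip n g g) \<le> 0" for t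
  proof -
    define x where "x i = v i + t * g i" for i
    have xo: "\<forall>a<k. ip n x (U a) = 0"
      using gorth Pv unfolding P_def x_def by (simp add: ip_add1 ip_scale1)
    have sG: "ip n v (mv G n g) = ip n g (mv G n v)"
      using ip_mv_sym[OF sym, of v g] ip_comm by metis
    have fx: "f x = f v + 2 * t * ip n g (mv G n v) + t\<^sup>2 * f g"
      unfolding f_def x_def mv_add mv_scale
      by (simp add: ip_add1 ip_add2 ip_scale1 ip_scale2 sG power2_eq_square algebra_simps)
    have xx: "ip n x x = ip n v v + 2 * t * ip n g v + t\<^sup>2 * ip n g g"
      unfolding x_def
      by (simp add: ip_add1 ip_add2 ip_scale1 ip_scale2 ip_comm[of n v g] power2_eq_square algebra_simps)
    have gg: "ip n g g = ip n g (mv G n v) - \<mu> * ip n g v"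
      unfolding g_def[abs_def] by (simp add: ip_diff2 ip_scale2)
    have "f x \<le> \<mu> * ip n x x" using key xo by blast
    hence "f v + 2 * t * ip n g (mv G n v) + t\<^sup>2 * f g \<le> \<mu> * (1 + 2 * t * ip n g v + t\<^sup>2 * ip n g g)"
      using fx xx Pv unfolding P_def by simp
    hence "2 * t * (ip n g (mv G n v) - \<mu> * ip n g v) + t\<^sup>2 * (f g - \<mu> * ip n g g) \<le> 0"
      using fv by (simp add: algebra_simps)
    thus ?thesis using gg by simp
  qed
  have "ip n g g = 0" by (rule quad_zero[OF ineq ip_self_nonneg])
  hence "\<forall>i<n. mv G n v i = \<mu> * v i" using ip_self_zero unfolding g_def by fastforce
  thus ?thesis using Pv unfolding P_def by blast
qed

lemma ip_sum1: "ip n (\<lambda>i. \<Sum>a\<in>A. c a * U a i) w = (\<Sum>a\<in>A. c a * ip n (U a) w)"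
proof -
  have "ip n (\<lambda>i. \<Sum>a\<in>A. c a * U a i) w = (\<Sum>i<n. \<Sum>a\<in>A. c a * U a i * w i)"
    unfolding ip_def by (simp add: sum_distrib_right)
  also have "\<dots> = (\<Sum>a\<in>A. \<Sum>i<n. c a * U a i * w i)" by (rule sum.swap)
  also have "\<dots> = (\<Sum>a\<in>A. c a * ip n (U a) w)"
    unfolding ip_def by (simp add: sum_distrib_left mult.assoc)
  finally show ?thesis .
qed

lemma mv_sum: "mv G n (\<lambda>i. \<Sum>a\<in>A. c a * U a i) j = (\<Sum>a\<in>A. c a * mv G n (U a) j)"
proof -
  have "mv G n (\<lambda>i. \<Sum>a\<in>A. c a * U a i) j = (\<Sum>i<n. \<Sum>a\<in>A. G j i * (c a * U a i))"
    unfolding mv_def by (simp add: sum_distrib_left)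
  also have "\<dots> = (\<Sum>a\<in>A. \<Sum>i<n. G j i * (c a * U a i))" by (rule sum.swap)
  also have "\<dots> = (\<Sum>a\<in>A. c a * mv G n (U a) j)"
    unfolding mv_def by (simp add: sum_distrib_left mult.left_commute)
  finally show ?thesis .
qed

lemma orth_complete:
  fixes U :: "nat \<Rightarrow> nat \<Rightarrow> real"
  assumes on: "\<forall>a<n. \<forall>b<n. ip n (U a) (U b) = (if a = b then 1 else 0)"
  shows "\<forall>v. \<forall>i<n. v i = (\<Sum>a<n. ip n v (U a) * U a i)"
proof (intro allI impI)
  fix v :: "nat \<Rightarrow> real" and i assume i: "i < n"
  define Q where "Q = mat n n (\<lambda>(i,a). U a i)"
  have Q: "Q \<in> carrier_mat n n" unfolding Q_def by simp
  have "transpose_mat Q * Q = 1\<^sub>m n"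
  proof (rule eq_matI)
    fix a b assume ab: "a < dim_row (1\<^sub>m n)" "b < dim_col (1\<^sub>m n)"
    have "(transpose_mat Q * Q) $$ (a, b) = (\<Sum>j\<in>{0..<n}. U a j * U b j)"
      using ab Q unfolding Q_def by (simp add: scalar_prod_def)
    also have "\<dots> = ip n (U a) (U b)" unfolding ip_def by (simp add: atLeast0LessThan)
    also have "\<dots> = 1\<^sub>m n $$ (a, b)" using on ab by simp
    finally show "(transpose_mat Q * Q) $$ (a, b) = 1\<^sub>m n $$ (a, b)" .
  qed (use Q in auto)
  hence QQ: "Q * transpose_mat Q = 1\<^sub>m n"
    using mat_mult_left_right_inverse[of "transpose_mat Q" n Q] Q by auto
  have d: "(\<Sum>a<n. U a j * U a i) = (if j = i then 1 else 0)" if j: "j < n" for j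
  proof -
    have "(Q * transpose_mat Q) $$ (j, i) = (\<Sum>a\<in>{0..<n}. U a j * U a i)"
      using i j Q unfolding Q_def by (simp add: scalar_prod_def)
    thus ?thesis using QQ i j by (simp add: atLeast0LessThan)
  qed
  have "(\<Sum>a<n. ip n v (U a) * U a i) = (\<Sum>a<n. \<Sum>j<n. v j * (U a j * U a i))"
    unfolding ip_def by (simp add: sum_distrib_right mult.assoc)
  also have "\<dots> = (\<Sum>j<n. \<Sum>a<n. v j * (U a j * U a i))" by (rule sum.swap)
  also have "\<dots> = (\<Sum>j<n. v j * (if j = i then 1 else 0))"
    by (intro sum.cong refl) (simp add: sum_distrib_left[symmetric] d)
  also have "\<dots> = (\<Sum>j<n. if j = i then v j else 0)" by (intro sum.cong) auto
  also have "\<dots> = v i" using i by simp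
  finally show "v i = (\<Sum>a<n. ip n v (U a) * U a i)" by simp
qed

definition ONF :: "nat \<Rightarrow> nat \<Rightarrow> (nat \<Rightarrow> nat \<Rightarrow> real) \<Rightarrow> bool" where
  "ONF n k U \<longleftrightarrow> (\<forall>a<k. \<forall>b<k. ip n (U a) (U b) = (if a = b then 1 else 0))"
definition EIF :: "nat \<Rightarrow> (nat \<Rightarrow> nat \<Rightarrow> real) \<Rightarrow> nat \<Rightarrow> (nat \<Rightarrow> nat \<Rightarrow> real) \<Rightarrow> (nat \<Rightarrow> real) \<Rightarrow> bool" where
  "EIF n G k U lam \<longleftrightarrow> (\<forall>a<k. \<forall>i<n. mv G n (U a) i = lam a * U a i)"
definition COF :: "nat \<Rightarrow> nat \<Rightarrow> (nat \<Rightarrow> nat \<Rightarrow> real) \<Rightarrow> bool" where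
  "COF n k U \<longleftrightarrow> (\<forall>v. \<forall>i<n. v i = (\<Sum>a<k. ip n v (U a) * U a i))"

lemma spectral:
  fixes G :: "nat \<Rightarrow> nat \<Rightarrow> real"
  assumes sym: "symm n G"
  shows "\<exists>k U lam. ONF n k U \<and> EIF n G k U lam \<and> COF n k U"
proof -
  have main: "(\<exists>U lam. ONF n k U \<and> EIF n G k U lam) \<or> (\<exists>k U lam. ONF n k U \<and> EIF n G k U lam \<and> COF n k U)"
    if "k \<le> n" for k
    using that
  proof (induction k)
    case 0 show ?case by (auto simp: ONF_def EIF_def)
  next
    case (Suc k)
    hence "(\<exists>U lam. ONF n k U \<and> EIF n G k U lam) \<or> (\<exists>k U lam. ONF n k U \<and> EIF n G k U lam \<and> COF n k U)"
      by simp
    thus ?case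
    proof
      assume "\<exists>U lam. ONF n k U \<and> EIF n G k U lam"
      then obtain U lam where on: "ONF n k U" and ei: "EIF n G k U lam" by blast
      show ?case
      proof (cases "COF n k U")
        case True thus ?thesis using on ei by blast
      next
        case False
        then obtain v i0 where i0: "i0 < n" "v i0 \<noteq> (\<Sum>a<k. ip n v (U a) * U a i0)"
          unfolding COF_def by blast
        define w0 where "w0 i = v i - (\<Sum>a<k. ip n v (U a) * U a i)" for i
        have w0o: "ip n w0 (U b) = 0" if b: "b < k" for b
        proof -
          have "ip n w0 (U b) = ip n v (U b) - (\<Sum>a<k. ip n v (U a) * ip n (U a) (U b))"
            unfolding w0_def[abs_def] by (simp add: ip_diff1 ip_sum1)
          also have "(\<Sum>a<k. ip n v (U a) * ip n (U a) (U b)) = (\<Sum>a<k. if a = b then ip n v (U a) else 0)"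
            using on b unfolding ONF_def by (intro sum.cong refl) auto
          also have "\<dots> = ip n v (U b)" using b by simp
          finally show ?thesis by simp
        qed
        have "w0 i0 \<noteq> 0" using i0 unfolding w0_def by simp
        hence pos: "ip n w0 w0 > 0"
          using ip_self_zero[of n w0 i0] ip_self_nonneg[of n w0] i0 by linarith
        define s where "s = 1 / sqrt (ip n w0 w0)"
        define w where "w i = s * w0 i" for i
        have "ip n w w = s * s * ip n w0 w0" unfolding w_def[abs_def] by (simp add: ip_scale1 ip_scale2)
        also have "\<dots> = 1" using pos unfolding s_def by (simp add: field_simps)
        finally have ww: "ip n w w = 1" .
        have wo: "\<forall>a<k. ip n w (U a) = 0" using w0o unfolding w_def[abs_def] by (simp add: ip_scale1)
        have "\<exists>u \<mu>. ip n u u = 1 \<and> (\<forall>a<k. ip n u (U a) = 0) \<and> (\<forall>i<n. mv G n u i = \<mu> * u i)"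
          by (rule max_eig[OF sym ei[unfolded EIF_def] ww wo])
        then obtain u \<mu> where u: "ip n u u = 1" "\<forall>a<k. ip n u (U a) = 0" "\<forall>i<n. mv G n u i = \<mu> * u i"
          by blast
        define U' where "U' = U(k := u)"
        define lam' where "lam' = lam(k := \<mu>)"
        have "ONF n (Suc k) U'"
          unfolding ONF_def
        proof (intro allI impI)
          fix a b assume a: "a < Suc k" and b: "b < Suc k"
          show "ip n (U' a) (U' b) = (if a = b then 1 else 0)"
          proof (cases "a = k")
            case True
            show ?thesis
            proof (cases "b = k")
              case True thus ?thesis using \<open>a = k\<close> u(1) by (simp add: U'_def)
            next
              case False hence "b < k" using b by simp
              thus ?thesis using \<open>a = k\<close> u(2) False by (simp add: U'_def)
            qed
          next
            case False hence ak: "a < k" using a by simp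
            show ?thesis
            proof (cases "b = k")
              case True thus ?thesis using ak u(2) ip_comm[of n "U a" u] by (simp add: U'_def)
            next
              case False hence "b < k" using b by simp
              thus ?thesis using ak on \<open>a \<noteq> k\<close> False by (simp add: U'_def ONF_def)
            qed
          qed
        qed
        moreover have "EIF n G (Suc k) U' lam'"
          using ei u unfolding U'_def lam'_def EIF_def by (auto simp: less_Suc_eq)
        ultimately show ?thesis by blast
      qed
    next
      assume "\<exists>k U lam. ONF n k U \<and> EIF n G k U lam \<and> COF n k U" thus ?case by blast
    qed
  qed
  from main[of n] show ?thesis
  proof
    assume "\<exists>U lam. ONF n n U \<and> EIF n G n U lam"
    then obtain U lam where "ONF n n U" "EIF n G n U lam" by blast
    thus ?thesis using orth_complete[of n U] unfolding ONF_def COF_def by blast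
  qed auto
qed

lemma gram_symm: "symm n (gram R M)"
  unfolding symm_def gram_def by (simp add: mult.commute)

lemma gram_quad: "ip n v (mv (gram R M) n v) = (\<Sum>r\<in>R. (mv M n v r)\<^sup>2)"
proof -
  have "ip n v (mv (gram R M) n v) = (\<Sum>i<n. \<Sum>j<n. \<Sum>r\<in>R. (M r i * v i) * (M r j * v j))"
    unfolding ip_def mv_def gram_def by (simp add: sum_distrib_left sum_distrib_right mult_ac)
  also have "\<dots> = (\<Sum>i<n. \<Sum>r\<in>R. \<Sum>j<n. (M r i * v i) * (M r j * v j))"
    by (rule sum.cong[OF refl], rule sum.swap)
  also have "\<dots> = (\<Sum>r\<in>R. \<Sum>i<n. \<Sum>j<n. (M r i * v i) * (M r j * v j))"
    by (rule sum.swap)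
  also have "\<dots> = (\<Sum>r\<in>R. (mv M n v r)\<^sup>2)"
    unfolding mv_def power2_eq_square by (simp add: sum_product)
  finally show ?thesis .
qed

lemma ip_comb_basis:
  assumes on: "ONF n k U" and P: "P \<subseteq> {..<k}" and a: "a \<in> P"
  shows "ip n (\<lambda>i. \<Sum>b\<in>P. c b * U b i) (U a) = c a"
proof -
  have "ip n (\<lambda>i. \<Sum>b\<in>P. c b * U b i) (U a) = (\<Sum>b\<in>P. c b * ip n (U b) (U a))" by (rule ip_sum1)
  also have "\<dots> = (\<Sum>b\<in>P. if b = a then c b else 0)"
  proof (intro sum.cong refl)
    fix b assume "b \<in> P"
    hence "b < k" "a < k" using P a by auto
    thus "c b * ip n (U b) (U a) = (if b = a then c b else 0)" using on unfolding ONF_def by auto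
  qed
  also have "\<dots> = c a" using a P by (simp add: finite_subset)
  finally show ?thesis .
qed

lemma sv_facts:
  fixes M :: "nat \<Rightarrow> nat \<Rightarrow> real"
  assumes n: "n > 0" and R: "finite R"
  shows "finite {s. is_singular_value R n M s}"
    and "spec_norm R n M \<ge> 0"
    and "\<And>v. (\<Sum>r\<in>R. (mv M n v r)\<^sup>2) \<le> (spec_norm R n M)\<^sup>2 * ip n v v"
    and "mat_nonzero R n M \<Longrightarrow> sigma_min R n M > 0"
    and "\<And>x0. \<exists>d. (\<forall>r\<in>R. mv M n d r = mv M n x0 r) \<and>
            (sigma_min R n M)\<^sup>2 * ip n d d \<le> (\<Sum>r\<in>R. (mv M n d r)\<^sup>2)"
proof -
  define G where "G = gram R M"
  obtain k U lam where on: "ONF n k U" and ei: "EIF n G k U lam" and co: "COF n k U"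
    using spectral[OF gram_symm[of n R M]] unfolding G_def by blast
  define S where "S = {s. is_singular_value R n M s}"
  define Sp where "Sp = {s. is_singular_value R n M s \<and> s > 0}"
  have sv_iff: "is_singular_value R n M s \<longleftrightarrow> s \<ge> 0 \<and> (\<exists>v. (\<exists>j<n. v j \<noteq> 0) \<and> (\<forall>i<n. mv G n v i = s\<^sup>2 * v i))" for s
    unfolding is_singular_value_def G_def mv_def by simp
  have lam_eq: "lam a = (\<Sum>r\<in>R. (mv M n (U a) r)\<^sup>2)" if a: "a < k" for a
  proof -
    have "lam a = lam a * ip n (U a) (U a)" using on a unfolding ONF_def by simp
    also have "\<dots> = ip n (U a) (\<lambda>i. lam a * U a i)" by (simp add: ip_scale2)
    also have "\<dots> = ip n (U a) (mv G n (U a))" using ei a unfolding EIF_def by (intro ip_cong) auto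
    also have "\<dots> = (\<Sum>r\<in>R. (mv M n (U a) r)\<^sup>2)" unfolding G_def by (rule gram_quad)
    finally show ?thesis .
  qed
  have lam_nn: "lam a \<ge> 0" if "a < k" for a using lam_eq[OF that] by (simp add: sum_nonneg)
  have vexp: "v i = (\<Sum>a<k. ip n v (U a) * U a i)" if "i < n" for v i
    using co that unfolding COF_def by blast
  have Gexp: "mv G n v i = (\<Sum>a<k. (ip n v (U a) * lam a) * U a i)" if i: "i < n" for v i
  proof -
    have "mv G n v = mv G n (\<lambda>j. \<Sum>a<k. ip n v (U a) * U a j)" by (intro mv_cong vexp)
    hence "mv G n v i = (\<Sum>a<k. ip n v (U a) * mv G n (U a) i)" by (simp add: mv_sum)
    also have "\<dots> = (\<Sum>a<k. (ip n v (U a) * lam a) * U a i)"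
      using ei i unfolding EIF_def by (intro sum.cong refl) auto
    finally show ?thesis .
  qed
  have quad: "ip n v (mv G n v) = (\<Sum>a<k. lam a * (ip n v (U a))\<^sup>2)" for v
  proof -
    have "ip n v (mv G n v) = ip n (\<lambda>i. \<Sum>a<k. (ip n v (U a) * lam a) * U a i) v"
      by (subst ip_comm, intro ip_cong Gexp) auto
    also have "\<dots> = (\<Sum>a<k. (ip n v (U a) * lam a) * ip n (U a) v)" by (rule ip_sum1)
    also have "\<dots> = (\<Sum>a<k. lam a * (ip n v (U a))\<^sup>2)"
      by (intro sum.cong refl) (simp add: ip_comm[of n "U _" v] power2_eq_square)
    finally show ?thesis .
  qed
  have norm: "ip n v v = (\<Sum>a<k. (ip n v (U a))\<^sup>2)" for v
  proof -
    have "ip n v v = ip n (\<lambda>i. \<Sum>a<k. ip n v (U a) * U a i) v" by (intro ip_cong vexp) auto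
    also have "\<dots> = (\<Sum>a<k. ip n v (U a) * ip n (U a) v)" by (rule ip_sum1)
    also have "\<dots> = (\<Sum>a<k. (ip n v (U a))\<^sup>2)"
      by (intro sum.cong refl) (simp add: ip_comm[of n "U _" v] power2_eq_square)
    finally show ?thesis .
  qed
  have sv_lam: "is_singular_value R n M s \<Longrightarrow> \<exists>a<k. s\<^sup>2 = lam a" for s
  proof -
    assume "is_singular_value R n M s"
    then obtain v where v0: "\<exists>j<n. v j \<noteq> 0" and ev: "\<forall>i<n. mv G n v i = s\<^sup>2 * v i"
      unfolding sv_iff by blast
    show ?thesis
    proof (rule ccontr)
      assume "\<not> (\<exists>a<k. s\<^sup>2 = lam a)"
      hence ne: "\<forall>a<k. s\<^sup>2 \<noteq> lam a" by blast
      have z: "ip n v (U a) = 0" if a: "a < k" for a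
      proof -
        have "s\<^sup>2 * ip n v (U a) = ip n (mv G n v) (U a)"
          using ev by (simp add: ip_scale1[symmetric]) (intro ip_cong, auto)
        also have "\<dots> = ip n v (mv G n (U a))" using ip_mv_sym[OF gram_symm[of n R M]] G_def by simp
        also have "\<dots> = ip n v (\<lambda>i. lam a * U a i)" using ei a unfolding EIF_def by (intro ip_cong) auto
        also have "\<dots> = lam a * ip n v (U a)" by (simp add: ip_scale2)
        finally have "(s\<^sup>2 - lam a) * ip n v (U a) = 0" by (simp add: algebra_simps)
        thus ?thesis using ne a by simp
      qed
      have "\<forall>j<n. v j = 0"
      proof (intro allI impI)
        fix j assume "j < n"
        hence "v j = (\<Sum>a<k. ip n v (U a) * U a j)" by (rule vexp)
        also have "\<dots> = 0" using z by simp
        finally show "v j = 0" .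
      qed
      thus False using v0 by blast
    qed
  qed
  have lam_sv: "is_singular_value R n M (sqrt (lam a))" if a: "a < k" for a
  proof -
    have "\<exists>j<n. U a j \<noteq> 0"
    proof (rule ccontr)
      assume "\<not> ?thesis"
      hence "ip n (U a) (U a) = 0" unfolding ip_def by simp
      thus False using on a unfolding ONF_def by simp
    qed
    moreover have "\<forall>i<n. mv G n (U a) i = (sqrt (lam a))\<^sup>2 * U a i"
      using ei a lam_nn[OF a] unfolding EIF_def by simp
    ultimately show ?thesis unfolding sv_iff using lam_nn[OF a] by auto
  qed
  have Ssub: "S \<subseteq> (\<lambda>a. sqrt (lam a)) ` {..<k}"
  proof
    fix s assume "s \<in> S"
    hence s: "is_singular_value R n M s" unfolding S_def by simp
    then obtain a where "a < k" "s\<^sup>2 = lam a" using sv_lam by blast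
    moreover have "s \<ge> 0" using s unfolding is_singular_value_def by simp
    ultimately have "a < k" "s = sqrt (lam a)" by (auto simp: real_sqrt_unique)
    thus "s \<in> (\<lambda>a. sqrt (lam a)) ` {..<k}" by blast
  qed
  have finS: "finite S" using Ssub finite_subset by blast
  thus "finite {s. is_singular_value R n M s}" unfolding S_def .
  have k: "k > 0"
  proof (rule ccontr)
    assume "\<not> k > 0" hence "k = 0" by simp
    hence "(\<lambda>_. 1::real) 0 = 0" using vexp[of 0 "\<lambda>_. 1"] n by simp
    thus False by simp
  qed
  have Sne: "S \<noteq> {}" using lam_sv[OF k] unfolding S_def by auto
  have spec: "spec_norm R n M = Max S" unfolding spec_norm_def S_def ..
  have lam_le: "lam a \<le> (spec_norm R n M)\<^sup>2" if a: "a < k" for a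
  proof -
    have "sqrt (lam a) \<le> Max S" using lam_sv[OF a] finS unfolding S_def by (intro Max_ge) auto
    hence "(sqrt (lam a))\<^sup>2 \<le> (Max S)\<^sup>2" using lam_nn[OF a] by (intro power_mono) auto
    thus ?thesis using lam_nn[OF a] spec by simp
  qed
  have "Max S \<in> S" using finS Sne by (rule Max_in)
  thus "spec_norm R n M \<ge> 0" unfolding spec S_def is_singular_value_def by simp
  show "(\<Sum>r\<in>R. (mv M n v r)\<^sup>2) \<le> (spec_norm R n M)\<^sup>2 * ip n v v" for v
  proof -
    have "(\<Sum>r\<in>R. (mv M n v r)\<^sup>2) = (\<Sum>a<k. lam a * (ip n v (U a))\<^sup>2)"
      using quad[of v] gram_quad[of n v R M] unfolding G_def by simp
    also have "\<dots> \<le> (\<Sum>a<k. (spec_norm R n M)\<^sup>2 * (ip n v (U a))\<^sup>2)"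
      by (intro sum_mono mult_right_mono lam_le) auto
    also have "\<dots> = (spec_norm R n M)\<^sup>2 * ip n v v" by (simp add: norm sum_distrib_left)
    finally show ?thesis .
  qed
  have finSp: "finite Sp" using finS unfolding S_def Sp_def by (auto intro: finite_subset)
  have sig: "sigma_min R n M = Min Sp" unfolding sigma_min_def Sp_def ..
  have sig_le: "sigma_min R n M > 0 \<and> (sigma_min R n M)\<^sup>2 \<le> lam a" if a: "a < k" and la: "lam a > 0" for a
  proof -
    have inSp: "sqrt (lam a) \<in> Sp" using lam_sv[OF a] la unfolding Sp_def by simp
    have "Min Sp \<in> Sp" using finSp inSp by (intro Min_in) auto
    hence pos: "Min Sp > 0" unfolding Sp_def by simp
    have "Min Sp \<le> sqrt (lam a)" using finSp inSp by (rule Min_le)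
    hence "(Min Sp)\<^sup>2 \<le> (sqrt (lam a))\<^sup>2" using pos by (intro power_mono) auto
    thus ?thesis using la pos sig by simp
  qed
  show "mat_nonzero R n M \<Longrightarrow> sigma_min R n M > 0"
  proof -
    assume "mat_nonzero R n M"
    then obtain r0 j where r0: "r0 \<in> R" and j: "j < n" and nz: "M r0 j \<noteq> 0"
      unfolding mat_nonzero_def by blast
    define e where "e i = (if i = j then 1 else 0::real)" for i
    have "mv M n e r = M r j" for r unfolding mv_def e_def using j by (simp add: if_distrib cong: if_cong)
    hence "(\<Sum>r\<in>R. (mv M n e r)\<^sup>2) = (\<Sum>r\<in>R. (M r j)\<^sup>2)" by simp
    also have "\<dots> > 0" using R r0 nz by (intro sum_pos2[of R r0]) auto
    finally have "(\<Sum>a<k. lam a * (ip n e (U a))\<^sup>2) > 0"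
      using quad[of e] gram_quad[of n e R M] unfolding G_def by simp
    then obtain a where "a < k" "lam a * (ip n e (U a))\<^sup>2 \<noteq> 0"
      by (metis (no_types, lifting) lessThan_iff less_irrefl sum.neutral)
    hence "a < k" "lam a > 0" using lam_nn by (auto simp: order_le_less)
    thus "sigma_min R n M > 0" using sig_le by blast
  qed
  show "\<exists>d. (\<forall>r\<in>R. mv M n d r = mv M n x0 r) \<and>
            (sigma_min R n M)\<^sup>2 * ip n d d \<le> (\<Sum>r\<in>R. (mv M n d r)\<^sup>2)" for x0
  proof -
    define P where "P = {a. a < k \<and> lam a > 0}"
    have P: "P \<subseteq> {..<k}" unfolding P_def by auto
    define c where "c a = ip n x0 (U a)" for a
    define d where "d i = (\<Sum>b\<in>P. c b * U b i)" for i
    have MU0: "mv M n (U a) r = 0" if "a < k" "a \<notin> P" "r \<in> R" for a r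
    proof -
      have "lam a = 0" using that lam_nn unfolding P_def by force
      hence "(\<Sum>r\<in>R. (mv M n (U a) r)\<^sup>2) = 0" using lam_eq that by simp
      thus ?thesis using R that by (simp add: sum_nonneg_eq_0_iff)
    qed
    have Md: "mv M n d r = mv M n x0 r" if r: "r \<in> R" for r
    proof -
      have "mv M n x0 = mv M n (\<lambda>j. \<Sum>a<k. c a * U a j)" unfolding c_def by (intro mv_cong vexp)
      hence "mv M n x0 r = (\<Sum>a<k. c a * mv M n (U a) r)" by (simp add: mv_sum)
      also have "\<dots> = (\<Sum>a\<in>P. c a * mv M n (U a) r)"
        using P MU0 r by (intro sum.mono_neutral_right) auto
      also have "\<dots> = mv M n d r" unfolding d_def[abs_def] by (simp add: mv_sum)
      finally show ?thesis by simp
    qed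
    have dU: "ip n d (U a) = c a" if "a \<in> P" for a
      unfolding d_def[abs_def] by (rule ip_comb_basis[OF on P that])
    have Gd: "mv G n d i = (\<Sum>b\<in>P. (c b * lam b) * U b i)" if i: "i < n" for i
    proof -
      have "mv G n d i = (\<Sum>b\<in>P. c b * mv G n (U b) i)" unfolding d_def[abs_def] by (simp add: mv_sum)
      also have "\<dots> = (\<Sum>b\<in>P. (c b * lam b) * U b i)"
        using ei i P unfolding EIF_def by (intro sum.cong refl) auto
      finally show ?thesis .
    qed
    have "(\<Sum>r\<in>R. (mv M n d r)\<^sup>2) = ip n d (mv G n d)" using gram_quad[of n d R M] G_def by simp
    also have "\<dots> = ip n (\<lambda>i. \<Sum>b\<in>P. (c b * lam b) * U b i) d"
      by (subst ip_comm, intro ip_cong Gd) auto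
    also have "\<dots> = (\<Sum>b\<in>P. (c b * lam b) * ip n (U b) d)" by (rule ip_sum1)
    also have "\<dots> = (\<Sum>b\<in>P. lam b * (c b)\<^sup>2)"
      by (intro sum.cong refl) (simp add: ip_comm[of n "U _" d] dU power2_eq_square)
    finally have Q: "(\<Sum>r\<in>R. (mv M n d r)\<^sup>2) = (\<Sum>b\<in>P. lam b * (c b)\<^sup>2)" .
    have "ip n d d = (\<Sum>b\<in>P. c b * ip n (U b) d)" unfolding d_def[abs_def] by (rule ip_sum1)
    also have "\<dots> = (\<Sum>b\<in>P. (c b)\<^sup>2)"
      by (intro sum.cong refl) (simp add: ip_comm[of n "U _" d] dU power2_eq_square)
    finally have N: "ip n d d = (\<Sum>b\<in>P. (c b)\<^sup>2)" .
    have "(sigma_min R n M)\<^sup>2 * ip n d d = (\<Sum>b\<in>P. (sigma_min R n M)\<^sup>2 * (c b)\<^sup>2)"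
      by (simp add: N sum_distrib_left)
    also have "\<dots> \<le> (\<Sum>b\<in>P. lam b * (c b)\<^sup>2)"
      using sig_le unfolding P_def by (intro sum_mono mult_right_mono) auto
    finally have "(sigma_min R n M)\<^sup>2 * ip n d d \<le> (\<Sum>r\<in>R. (mv M n d r)\<^sup>2)" using Q by simp
    thus ?thesis using Md by blast
  qed
qed

lemma mv_lin: "mv G n (\<lambda>j. a j + t * b j) i = mv G n a i + t * mv G n b i"
  unfolding mv_def by (simp add: distrib_left sum.distrib sum_distrib_left mult_ac)

lemma mv_zero: "mv G n (\<lambda>j. 0) i = 0"
  unfolding mv_def by simp

lemma dir_bound:
  fixes F :: "(nat \<Rightarrow> nat \<Rightarrow> real) \<Rightarrow> real"
  assumes lim: "((\<lambda>t. (F (\<lambda>l j. x l j + t * d l j) - F x) / t) \<longlongrightarrow> D) (at_right 0)"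
    and bnd: "\<And>t. 0 < t \<Longrightarrow> t < 1 \<Longrightarrow> (F (\<lambda>l j. x l j + t * d l j) - F x) / t \<le> A + t * B"
  shows "D \<le> A"
proof -
  have "((\<lambda>t. A + t * B) \<longlongrightarrow> A + 0 * B) (at_right 0)"
    by (intro tendsto_intros)
  hence l2: "((\<lambda>t. A + t * B) \<longlongrightarrow> A) (at_right 0)" by simp
  show ?thesis
    by (rule tendsto_le[OF trivial_limit_at_right_real l2 lim])
       (rule eventually_at_rightI[of 0 1], use bnd in auto)
qed

lemma quad_diff:
  fixes e f :: "nat \<Rightarrow> real"
  assumes "t \<noteq> 0"
  shows "((1/2) * (vnorm2 q (\<lambda>i. e i - t * f i))\<^sup>2 - (1/2) * (vnorm2 q e)\<^sup>2) / t
     = (\<Sum>i<q. - e i * f i) + t * ((1/2) * (\<Sum>i<q. (f i)\<^sup>2))"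
proof -
  have s1: "(vnorm2 q (\<lambda>i. e i - t * f i))\<^sup>2 = (\<Sum>i<q. (e i - t * f i)\<^sup>2)"
    unfolding vnorm2_def by (simp add: sum_nonneg)
  have s2: "(vnorm2 q e)\<^sup>2 = (\<Sum>i<q. (e i)\<^sup>2)"
    unfolding vnorm2_def by (simp add: sum_nonneg)
  have "(\<Sum>i<q. (e i - t * f i)\<^sup>2) = (\<Sum>i<q. (e i)\<^sup>2 - 2 * t * (e i * f i) + t\<^sup>2 * (f i)\<^sup>2)"
    by (intro sum.cong) (auto simp: power2_eq_square algebra_simps)
  also have "\<dots> = (\<Sum>i<q. (e i)\<^sup>2) - 2 * t * (\<Sum>i<q. e i * f i) + t\<^sup>2 * (\<Sum>i<q. (f i)\<^sup>2)"
    by (simp add: sum.distrib sum_subtractf sum_distrib_left)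
  finally have ex: "(\<Sum>i<q. (e i - t * f i)\<^sup>2) = (\<Sum>i<q. (e i)\<^sup>2) - 2 * t * (\<Sum>i<q. e i * f i) + t\<^sup>2 * (\<Sum>i<q. (f i)\<^sup>2)" .
  have ng: "(\<Sum>i<q. - e i * f i) = - (\<Sum>i<q. e i * f i)" by (simp add: sum_negf)
  show ?thesis using assms unfolding s1 s2 ex ng
    by (simp add: field_simps power2_eq_square)
qed

lemma vnorm2_nonneg: "vnorm2 q v \<ge> 0" unfolding vnorm2_def by (simp add: sum_nonneg)

lemma vnorm2_sq: "(vnorm2 q v)\<^sup>2 = (\<Sum>i<q. (v i)\<^sup>2)"
  unfolding vnorm2_def by (simp add: sum_nonneg)

lemma cs: "(\<Sum>i<q. a i * b i) \<le> vnorm2 q a * vnorm2 q b"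
proof -
  have "(\<Sum>i<q. a i * b i)\<^sup>2 \<le> (\<Sum>i<q. (a i)\<^sup>2) * (\<Sum>i<q. (b i)\<^sup>2)"
    by (rule Cauchy_Schwarz_ineq_sum)
  hence "\<bar>\<Sum>i<q. a i * b i\<bar> \<le> sqrt ((\<Sum>i<q. (a i)\<^sup>2) * (\<Sum>i<q. (b i)\<^sup>2))"
    using real_le_rsqrt by (metis real_sqrt_abs real_sqrt_le_mono)
  thus ?thesis unfolding vnorm2_def by (simp add: real_sqrt_mult)
qed

definition adm :: "nat \<Rightarrow> nat \<Rightarrow> nat set set" where
  "adm K m = {\<Lambda>. \<Lambda> \<subseteq> {..<m} \<and> card \<Lambda> = m - K}"

lemma adm_finite: "finite (adm K m)"
  unfolding adm_def by (rule finite_subset[of _ "Pow {..<m}"]) auto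

lemma adm_ne: "adm K m \<noteq> {}"
proof -
  have "{..<m - K} \<in> adm K m" unfolding adm_def by auto
  thus ?thesis by blast
qed

lemma trimmed_adm: "trimmed K m p z = Min ((\<lambda>\<Lambda>. \<Sum>i\<in>\<Lambda>. block_norm p z i) ` adm K m)"
  unfolding trimmed_def adm_def ..

lemma trimmed_le: "\<Lambda> \<subseteq> {..<m} \<Longrightarrow> card \<Lambda> = m - K \<Longrightarrow> trimmed K m p z \<le> (\<Sum>i\<in>\<Lambda>. block_norm p z i)"
  unfolding trimmed_adm using adm_finite by (intro Min_le) (auto simp: adm_def)

lemma trimmed_obtain: "\<exists>\<Lambda>. \<Lambda> \<subseteq> {..<m} \<and> card \<Lambda> = m - K \<and> trimmed K m p z = (\<Sum>i\<in>\<Lambda>. block_norm p z i)"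
proof -
  have "trimmed K m p z \<in> (\<lambda>\<Lambda>. \<Sum>i\<in>\<Lambda>. block_norm p z i) ` adm K m"
    unfolding trimmed_adm using adm_finite adm_ne by (intro Min_in) auto
  thus ?thesis unfolding adm_def by auto
qed

lemma block_norm_nonneg: "block_norm p z i \<ge> 0" unfolding block_norm_def by (simp add: sum_nonneg)

lemma trimmed_nonneg: "trimmed K m p z \<ge> 0"
proof -
  obtain \<Lambda> where "trimmed K m p z = (\<Sum>i\<in>\<Lambda>. block_norm p z i)" using trimmed_obtain by blast
  thus ?thesis by (simp add: sum_nonneg block_norm_nonneg)
qed

lemma block_norm_scale:
  assumes "\<And>r. r < p \<Longrightarrow> z' (i * p + r) = s * z (i * p + r)" "s \<ge> 0"
  shows "block_norm p z' i = s * block_norm p z i"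
proof -
  have "(\<Sum>r<p. (z' (i * p + r))\<^sup>2) = s\<^sup>2 * (\<Sum>r<p. (z (i * p + r))\<^sup>2)"
    using assms(1) by (simp add: sum_distrib_left power_mult_distrib)
  thus ?thesis unfolding block_norm_def using assms(2) by (simp add: real_sqrt_mult)
qed

lemma trimmed_shrink:
  assumes act: "\<Lambda> \<subseteq> {..<m}" "card \<Lambda> = m - K" "trimmed K m p z = (\<Sum>i\<in>\<Lambda>. block_norm p z i)"
    and sc: "\<And>i r. i \<in> \<Lambda> \<Longrightarrow> r < p \<Longrightarrow> z' (i * p + r) = s * z (i * p + r)" and s: "s \<ge> 0"
  shows "trimmed K m p z' \<le> s * trimmed K m p z"
proof -
  have "trimmed K m p z' \<le> (\<Sum>i\<in>\<Lambda>. block_norm p z' i)" using act(1,2) by (rule trimmed_le)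
  also have "\<dots> = (\<Sum>i\<in>\<Lambda>. s * block_norm p z i)"
    using sc s by (intro sum.cong refl block_norm_scale) auto
  also have "\<dots> = s * trimmed K m p z" using act by (simp add: sum_distrib_left)
  finally show ?thesis .
qed

lemma sum_sq_le_sq_sum:
  fixes f :: "nat \<Rightarrow> real"
  assumes "finite A" "\<And>i. i \<in> A \<Longrightarrow> f i \<ge> 0"
  shows "(\<Sum>i\<in>A. (f i)\<^sup>2) \<le> (\<Sum>i\<in>A. f i)\<^sup>2"
  using assms
proof (induction A rule: finite_induct)
  case (insert x F)
  have "(\<Sum>i\<in>insert x F. (f i)\<^sup>2) = (f x)\<^sup>2 + (\<Sum>i\<in>F. (f i)\<^sup>2)" using insert by simp
  also have "\<dots> \<le> (f x)\<^sup>2 + (\<Sum>i\<in>F. f i)\<^sup>2" using insert by simp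
  also have "\<dots> \<le> (f x + (\<Sum>i\<in>F. f i))\<^sup>2"
    using insert by (simp add: power2_eq_square algebra_simps sum_nonneg)
  also have "\<dots> = (\<Sum>i\<in>insert x F. f i)\<^sup>2" using insert by simp
  finally show ?case .
qed simp

lemma block_rows_sum:
  assumes "finite \<Lambda>"
  shows "(\<Sum>r\<in>block_rows p \<Lambda>. (z r)\<^sup>2) = (\<Sum>i\<in>\<Lambda>. (block_norm p z i)\<^sup>2)"
proof -
  have inj: "inj_on (\<lambda>(i, r). i * p + r) (\<Lambda> \<times> {..<p})"
  proof (rule inj_onI, clarsimp)
    fix i r i' r' assume "r < p" "r' < p" "i * p + r = i' * p + r'"
    thus "i = i' \<and> r = r'"
      by (metis add.commute div_mult_self1 div_less mod_mult_self1 mod_less add_0 less_zeroE)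
  qed
  have img: "block_rows p \<Lambda> = (\<lambda>(i, r). i * p + r) ` (\<Lambda> \<times> {..<p})"
    unfolding block_rows_def by auto
  have "(\<Sum>r\<in>block_rows p \<Lambda>. (z r)\<^sup>2) = (\<Sum>(i, r)\<in>\<Lambda> \<times> {..<p}. (z (i * p + r))\<^sup>2)"
    unfolding img by (subst sum.reindex[OF inj]) (simp add: case_prod_unfold)
  also have "\<dots> = (\<Sum>i\<in>\<Lambda>. \<Sum>r<p. (z (i * p + r))\<^sup>2)"
    by (rule sum.cartesian_product[symmetric])
  also have "\<dots> = (\<Sum>i\<in>\<Lambda>. (block_norm p z i)\<^sup>2)"
    unfolding block_norm_def by (simp add: sum_nonneg)
  finally show ?thesis .
qed

lemma block_rows_sub: "\<Lambda> \<subseteq> {..<m} \<Longrightarrow> block_rows p \<Lambda> \<subseteq> {..<m * p}"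
proof
  fix x assume L: "\<Lambda> \<subseteq> {..<m}" and "x \<in> block_rows p \<Lambda>"
  then obtain i r where x: "x = i * p + r" "i \<in> \<Lambda>" "r < p" unfolding block_rows_def by auto
  hence "Suc i \<le> m" using L by auto
  hence "Suc i * p \<le> m * p" by (rule mult_right_mono) simp
  thus "x \<in> {..<m * p}" using x by simp
qed

lemma block_rows_finite: "finite \<Lambda> \<Longrightarrow> finite (block_rows p \<Lambda>)"
proof -
  assume "finite \<Lambda>"
  have "block_rows p \<Lambda> = (\<lambda>(i, r). i * p + r) ` (\<Lambda> \<times> {..<p})"
    unfolding block_rows_def by auto
  thus ?thesis using \<open>finite \<Lambda>\<close> by simp
qed

lemma block_rows_mem: "i \<in> \<Lambda> \<Longrightarrow> r < p \<Longrightarrow> i * p + r \<in> block_rows p \<Lambda>"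
  unfolding block_rows_def by auto

lemma quad_step:
  fixes A :: "nat \<Rightarrow> nat \<Rightarrow> nat \<Rightarrow> real"
  assumes "t \<noteq> 0"
  shows "((1/2) * (vnorm2 q (\<lambda>i. b i - (\<Sum>l\<in>I. mv (A l) (n l) (\<lambda>j. x l j + t * d l j) i)))\<^sup>2
          - (1/2) * (vnorm2 q (\<lambda>i. b i - (\<Sum>l\<in>I. mv (A l) (n l) (x l) i)))\<^sup>2) / t
       = (\<Sum>i<q. ((\<Sum>l\<in>I. mv (A l) (n l) (x l) i) - b i) * (\<Sum>l\<in>I. mv (A l) (n l) (d l) i))
         + t * ((1/2) * (\<Sum>i<q. (\<Sum>l\<in>I. mv (A l) (n l) (d l) i)\<^sup>2))"
proof -
  define e where "e i = b i - (\<Sum>l\<in>I. mv (A l) (n l) (x l) i)" for i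
  define f where "f i = (\<Sum>l\<in>I. mv (A l) (n l) (d l) i)" for i
  have "(\<lambda>i. b i - (\<Sum>l\<in>I. mv (A l) (n l) (\<lambda>j. x l j + t * d l j) i)) = (\<lambda>i. e i - t * f i)"
    unfolding e_def f_def by (simp add: mv_lin sum.distrib sum_distrib_left algebra_simps)
  moreover have "(\<lambda>i. b i - (\<Sum>l\<in>I. mv (A l) (n l) (x l) i)) = e" unfolding e_def ..
  ultimately have "((1/2) * (vnorm2 q (\<lambda>i. b i - (\<Sum>l\<in>I. mv (A l) (n l) (\<lambda>j. x l j + t * d l j) i)))\<^sup>2
          - (1/2) * (vnorm2 q (\<lambda>i. b i - (\<Sum>l\<in>I. mv (A l) (n l) (x l) i)))\<^sup>2) / t
      = (\<Sum>i<q. - e i * f i) + t * ((1/2) * (\<Sum>i<q. (f i)\<^sup>2))"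
    using quad_diff[OF assms] by simp
  also have "(\<Sum>i<q. - e i * f i) = (\<Sum>i<q. ((\<Sum>l\<in>I. mv (A l) (n l) (x l) i) - b i) * f i)"
    unfolding e_def by (intro sum.cong) auto
  finally show ?thesis unfolding f_def .
qed

lemma sum_diff_single:
  fixes f g :: "nat \<Rightarrow> real"
  assumes "finite I" "l0 \<in> I" "\<And>l. l \<in> I \<Longrightarrow> l \<noteq> l0 \<Longrightarrow> f l = g l"
  shows "(\<Sum>l\<in>I. f l) - (\<Sum>l\<in>I. g l) = f l0 - g l0"
proof -
  have "(\<Sum>l\<in>I. f l) = f l0 + (\<Sum>l\<in>I - {l0}. f l)" using assms by (simp add: sum.remove)
  moreover have "(\<Sum>l\<in>I. g l) = g l0 + (\<Sum>l\<in>I - {l0}. g l)" using assms by (simp add: sum.remove)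
  moreover have "(\<Sum>l\<in>I - {l0}. f l) = (\<Sum>l\<in>I - {l0}. g l)" using assms by (intro sum.cong) auto
  ultimately show ?thesis by simp
qed

lemma sum_single:
  fixes f :: "nat \<Rightarrow> real"
  assumes "finite I" "l0 \<in> I" "\<And>l. l \<in> I \<Longrightarrow> l \<noteq> l0 \<Longrightarrow> f l = 0"
  shows "(\<Sum>l\<in>I. f l) = f l0"
  using sum_diff_single[OF assms(1,2), of f "\<lambda>_. 0"] assms(3) by simp

lemma vnorm2_scale: "vnorm2 q (\<lambda>i. c * f i) = \<bar>c\<bar> * vnorm2 q f"
  unfolding vnorm2_def by (simp add: power_mult_distrib sum_distrib_left[symmetric] real_sqrt_mult)

lemma vnorm2_neg: "vnorm2 q (\<lambda>i. - f i) = vnorm2 q f"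
  unfolding vnorm2_def by simp

lemma res_bound:
  fixes r b :: "nat \<Rightarrow> real"
  assumes "0 \<le> - (\<Sum>i<q. r i * (r i + b i))"
  shows "vnorm2 q r \<le> vnorm2 q b"
proof -
  have "(\<Sum>i<q. r i * (r i + b i)) = (\<Sum>i<q. (r i)\<^sup>2) + (\<Sum>i<q. r i * b i)"
    by (simp add: power2_eq_square algebra_simps sum.distrib)
  hence "(vnorm2 q r)\<^sup>2 \<le> (\<Sum>i<q. r i * (- b i))"
    using assms by (simp add: vnorm2_sq sum_negf)
  also have "\<dots> \<le> vnorm2 q r * vnorm2 q (\<lambda>i. - b i)" by (rule cs)
  finally have "(vnorm2 q r)\<^sup>2 \<le> vnorm2 q r * vnorm2 q b" by (simp add: vnorm2_neg)
  thus ?thesis using vnorm2_nonneg[of q r] vnorm2_nonneg[of q b]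
    by (metis mult_le_cancel_left power2_eq_square not_le less_le_trans)
qed

lemma bn1: "block_norm 1 z i = \<bar>z i\<bar>"
  unfolding block_norm_def by simp

lemma bn1': "block_norm (Suc 0) z i = \<bar>z i\<bar>"
  using bn1 by simp

lemma sum_bn1: "(\<Sum>i\<in>A. block_norm (Suc 0) z i) = (\<Sum>i\<in>A. \<bar>z i\<bar>)"
  by (simp add: bn1')

lemma vnorm1_nonneg: "vnorm1 n x \<ge> 0" unfolding vnorm1_def by (simp add: sum_nonneg)

lemma vnorm1_shrink:
  assumes "t \<le> 1" shows "vnorm1 n (\<lambda>j. x j + t * - x j) = (1 - t) * vnorm1 n x"
proof -
  have "\<bar>x j + t * - x j\<bar> = (1 - t) * \<bar>x j\<bar>" for j
  proof -
    have "x j + t * - x j = (1 - t) * x j" by (simp add: algebra_simps)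
    thus ?thesis using assms by (simp add: abs_mult)
  qed
  thus ?thesis unfolding vnorm1_def by (simp add: sum_distrib_left)
qed

lemma vnorm1_shrink': "t \<le> 1 \<Longrightarrow> vnorm1 n (\<lambda>j. x j - t * x j) = (1 - t) * vnorm1 n x"
  using vnorm1_shrink[of t n x] by simp

lemma vnorm1_kill:
  assumes "j < n" "0 \<le> t" "t \<le> 1"
  shows "vnorm1 n (\<lambda>i. x i + t * (if i = j then - x j else 0)) - vnorm1 n x = - t * \<bar>x j\<bar>"
proof -
  have "vnorm1 n (\<lambda>i. x i + t * (if i = j then - x j else 0)) - vnorm1 n x
     = \<bar>x j + t * - x j\<bar> - \<bar>x j\<bar>"
    unfolding vnorm1_def
    using sum_diff_single[of "{..<n}" j "\<lambda>i. \<bar>x i + t * (if i = j then - x j else 0)\<bar>" "\<lambda>i. \<bar>x i\<bar>"] assms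
    by simp
  also have "\<bar>x j + t * - x j\<bar> = (1 - t) * \<bar>x j\<bar>"
  proof -
    have h: "x j + t * - x j = (1 - t) * x j" by (simp add: algebra_simps)
    show ?thesis unfolding h abs_mult using assms by simp
  qed
  also have "(1 - t) * \<bar>x j\<bar> - \<bar>x j\<bar> = - t * \<bar>x j\<bar>" by (simp add: algebra_simps)
  finally show ?thesis .
qed

lemma partB:
  fixes L :: nat and n :: "nat \<Rightarrow> nat" and \<gamma> :: "nat \<Rightarrow> real" and K :: "nat \<Rightarrow> nat"
    and q :: nat and A :: "nat \<Rightarrow> nat \<Rightarrow> nat \<Rightarrow> real" and b :: "nat \<Rightarrow> real"
    and \<eta> :: "nat \<Rightarrow> real" and xs :: "nat \<Rightarrow> nat \<Rightarrow> real"
  assumes hyp1: "\<forall>l\<in>{1..L}. \<gamma> l > 0 \<and> K l < n l \<and> \<eta> l \<ge> 0"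
    and hyp2: "\<forall>l\<in>{1..L}. \<gamma> l > Max ((\<lambda>j. vnorm2 q (\<lambda>i. A l i j)) ` {..<n l}) * vnorm2 q b - \<eta> l"
    and stat: "d_stationary
       (\<lambda>x. (1/2) * (vnorm2 q (\<lambda>i. b i - (\<Sum>l\<in>{1..L}. mv (A l) (n l) (x l) i)))\<^sup>2
            + (\<Sum>l\<in>{1..L}. \<eta> l * vnorm1 (n l) (x l))
            + (\<Sum>l\<in>{1..L}. \<gamma> l * trimmed (K l) (n l) 1 (x l)))
       xs"
  shows "\<forall>l\<in>{1..L}. trimmed (K l) (n l) 1 (xs l) = 0"
proof -
  define Q where "Q x = (1/2) * (vnorm2 q (\<lambda>i. b i - (\<Sum>l\<in>{1..L}. mv (A l) (n l) (x l) i)))\<^sup>2" for x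
  define P1 where "P1 x = (\<Sum>l\<in>{1..L}. \<eta> l * vnorm1 (n l) (x l))" for x
  define P2 where "P2 x = (\<Sum>l\<in>{1..L}. \<gamma> l * trimmed (K l) (n l) 1 (x l))" for x
  define r0 where "r0 i = (\<Sum>l\<in>{1..L}. mv (A l) (n l) (xs l) i) - b i" for i
  define Sd where "Sd d i = (\<Sum>l\<in>{1..L}. mv (A l) (n l) (d l) i)" for d i
  have st: "\<exists>D. ((\<lambda>t. ((Q (\<lambda>l j. xs l j + t * d l j) + P1 (\<lambda>l j. xs l j + t * d l j)
                  + P2 (\<lambda>l j. xs l j + t * d l j)) - (Q xs + P1 xs + P2 xs)) / t) \<longlongrightarrow> D) (at_right 0)
            \<and> D \<ge> 0" for d
    using stat unfolding d_stationary_def Q_def P1_def P2_def by blast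
  have key: "0 \<le> (\<Sum>i<q. r0 i * Sd d i) + c"
    if cb: "\<And>t. 0 < t \<Longrightarrow> t < 1 \<Longrightarrow>
       (P1 (\<lambda>l j. xs l j + t * d l j) - P1 xs) / t + (P2 (\<lambda>l j. xs l j + t * d l j) - P2 xs) / t \<le> c"
    for d c
  proof -
    obtain D where D: "((\<lambda>t. ((Q (\<lambda>l j. xs l j + t * d l j) + P1 (\<lambda>l j. xs l j + t * d l j)
                  + P2 (\<lambda>l j. xs l j + t * d l j)) - (Q xs + P1 xs + P2 xs)) / t) \<longlongrightarrow> D) (at_right 0)"
        "D \<ge> 0" using st by blast
    have "D \<le> (\<Sum>i<q. r0 i * Sd d i) + c"
    proof (rule dir_bound[where F = "\<lambda>x. Q x + P1 x + P2 x" and B = "(1/2) * (\<Sum>i<q. (Sd d i)\<^sup>2)"])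
      show "((\<lambda>t. (Q (\<lambda>l j. xs l j + t * d l j) + P1 (\<lambda>l j. xs l j + t * d l j) + P2 (\<lambda>l j. xs l j + t * d l j)
              - (Q xs + P1 xs + P2 xs)) / t) \<longlongrightarrow> D) (at_right 0)" by (rule D(1))
      fix t :: real assume t: "0 < t" "t < 1"
      have qd: "(Q (\<lambda>l j. xs l j + t * d l j) - Q xs) / t = (\<Sum>i<q. r0 i * Sd d i) + t * ((1/2) * (\<Sum>i<q. (Sd d i)\<^sup>2))"
        unfolding Q_def r0_def Sd_def using quad_step[where t=t and q=q and b=b and I="{1..L}" and A=A and n=n and x=xs and d=d] t by simp
      have "(Q (\<lambda>l j. xs l j + t * d l j) + P1 (\<lambda>l j. xs l j + t * d l j) + P2 (\<lambda>l j. xs l j + t * d l j)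
              - (Q xs + P1 xs + P2 xs)) / t
          = (Q (\<lambda>l j. xs l j + t * d l j) - Q xs) / t
            + ((P1 (\<lambda>l j. xs l j + t * d l j) - P1 xs) / t + (P2 (\<lambda>l j. xs l j + t * d l j) - P2 xs) / t)"
        by (simp add: diff_divide_distrib add_divide_distrib)
      also have "\<dots> \<le> (\<Sum>i<q. r0 i * Sd d i) + t * ((1/2) * (\<Sum>i<q. (Sd d i)\<^sup>2)) + c"
        using qd cb[OF t] by simp
      finally show "(Q (\<lambda>l j. xs l j + t * d l j) + P1 (\<lambda>l j. xs l j + t * d l j) + P2 (\<lambda>l j. xs l j + t * d l j)
              - (Q xs + P1 xs + P2 xs)) / t
          \<le> (\<Sum>i<q. r0 i * Sd d i) + c + t * ((1/2) * (\<Sum>i<q. (Sd d i)\<^sup>2))" by simp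
    qed
    thus ?thesis using D(2) by simp
  qed
  have P1nn: "P1 xs \<ge> 0" unfolding P1_def using hyp1 by (auto intro!: sum_nonneg simp: vnorm1_nonneg)
  have P2nn: "P2 xs \<ge> 0" unfolding P2_def using hyp1 by (auto intro!: sum_nonneg simp: trimmed_nonneg)
  have rb: "vnorm2 q r0 \<le> vnorm2 q b"
  proof -
    define d1 where "d1 l j = - xs l j" for l j
    have c1: "(P1 (\<lambda>l j. xs l j + t * d1 l j) - P1 xs) / t + (P2 (\<lambda>l j. xs l j + t * d1 l j) - P2 xs) / t \<le> 0"
      if t: "0 < t" "t < 1" for t
    proof -
      have "P1 (\<lambda>l j. xs l j + t * d1 l j) = (1 - t) * P1 xs"
        unfolding P1_def d1_def using t by (simp add: vnorm1_shrink' sum_distrib_left mult_ac)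
      hence e1: "(P1 (\<lambda>l j. xs l j + t * d1 l j) - P1 xs) / t = - P1 xs" using t by (simp add: field_simps)
      have "P2 (\<lambda>l j. xs l j + t * d1 l j) \<le> (\<Sum>l\<in>{1..L}. \<gamma> l * ((1 - t) * trimmed (K l) (n l) 1 (xs l)))"
        unfolding P2_def
      proof (intro sum_mono mult_left_mono)
        fix l assume l: "l \<in> {1..L}"
        obtain \<Lambda> where act: "\<Lambda> \<subseteq> {..<n l}" "card \<Lambda> = n l - K l"
          "trimmed (K l) (n l) 1 (xs l) = (\<Sum>i\<in>\<Lambda>. block_norm 1 (xs l) i)"
          using trimmed_obtain by blast
        show "trimmed (K l) (n l) 1 (\<lambda>j. xs l j + t * d1 l j) \<le> (1 - t) * trimmed (K l) (n l) 1 (xs l)"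
          by (rule trimmed_shrink[OF act]) (use t in \<open>auto simp: d1_def algebra_simps\<close>)
        have "0 < \<gamma> l" using hyp1 l by blast
        thus "0 \<le> \<gamma> l" by simp
      qed
      also have "\<dots> = (1 - t) * P2 xs" unfolding P2_def by (simp add: sum_distrib_left mult_ac)
      finally have "(P2 (\<lambda>l j. xs l j + t * d1 l j) - P2 xs) / t \<le> - P2 xs"
        using t by (simp add: field_simps)
      thus ?thesis using e1 P1nn P2nn by simp
    qed
    have "0 \<le> (\<Sum>i<q. r0 i * Sd d1 i) + 0" by (rule key) (use c1 in auto)
    moreover have "Sd d1 i = - (r0 i + b i)" for i
    proof -
      have "mv (A l) (n l) (d1 l) i = - mv (A l) (n l) (xs l) i" for l
        unfolding mv_def d1_def by (simp add: sum_negf)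
      thus ?thesis unfolding Sd_def r0_def by (simp add: sum_negf)
    qed
    ultimately have h: "0 \<le> (\<Sum>i<q. r0 i * (- (r0 i + b i)))" by simp
    have "(\<Sum>i<q. r0 i * (- (r0 i + b i))) = - (\<Sum>i<q. r0 i * (r0 i + b i))"
      by (simp add: sum_negf[symmetric] algebra_simps)
    with h have "0 \<le> - (\<Sum>i<q. r0 i * (r0 i + b i))" by simp
    thus ?thesis by (rule res_bound)
  qed
  show ?thesis
  proof (rule ccontr)
    assume "\<not> ?thesis"
    then obtain l0 where l0: "l0 \<in> {1..L}" and Tnz: "trimmed (K l0) (n l0) 1 (xs l0) \<noteq> 0" by blast
    have Tpos: "trimmed (K l0) (n l0) 1 (xs l0) > 0" using Tnz trimmed_nonneg[of "K l0" "n l0" 1 "xs l0"] by simp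
    obtain \<Lambda> where act: "\<Lambda> \<subseteq> {..<n l0}" "card \<Lambda> = n l0 - K l0"
      "trimmed (K l0) (n l0) 1 (xs l0) = (\<Sum>i\<in>\<Lambda>. block_norm 1 (xs l0) i)"
      using trimmed_obtain by blast
    have finL: "finite \<Lambda>" using act(1) finite_subset by blast
    obtain j where j: "j \<in> \<Lambda>" "xs l0 j \<noteq> 0"
    proof (rule ccontr)
      assume "\<not> thesis"
      hence "\<forall>j\<in>\<Lambda>. xs l0 j = 0" using that by blast
      hence "(\<Sum>i\<in>\<Lambda>. block_norm 1 (xs l0) i) = 0" by (simp add: sum_bn1)
      thus False using Tpos act(3) by simp
    qed
    have jn: "j < n l0" using j act(1) by auto
    define x0 where "x0 = xs l0 j"
    define d2 where "d2 l i = (if l = l0 \<and> i = j then - x0 else 0)" for l i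
    define Mx where "Mx = Max ((\<lambda>j. vnorm2 q (\<lambda>i. A l0 i j)) ` {..<n l0})"
    have c2: "(P1 (\<lambda>l j. xs l j + t * d2 l j) - P1 xs) / t + (P2 (\<lambda>l j. xs l j + t * d2 l j) - P2 xs) / t
        \<le> - (\<eta> l0 + \<gamma> l0) * \<bar>x0\<bar>"
      if t: "0 < t" "t < 1" for t
    proof -
      have same: "(\<lambda>j. xs l j + t * d2 l j) = xs l" if "l \<noteq> l0" for l
        using that unfolding d2_def by auto
      have x'0: "(\<lambda>i. xs l0 i + t * d2 l0 i) = (\<lambda>i. xs l0 i + t * (if i = j then - xs l0 j else 0))"
        unfolding d2_def x0_def by auto
      have "P1 (\<lambda>l j. xs l j + t * d2 l j) - P1 xs
          = \<eta> l0 * vnorm1 (n l0) (\<lambda>j. xs l0 j + t * d2 l0 j) - \<eta> l0 * vnorm1 (n l0) (xs l0)"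
        unfolding P1_def using l0 same by (intro sum_diff_single) auto
      also have "\<dots> = \<eta> l0 * (- t * \<bar>x0\<bar>)"
        unfolding x'0 using vnorm1_kill[OF jn, of t "xs l0"] t
        by (simp add: right_diff_distrib[symmetric] x0_def)
      finally have e1: "(P1 (\<lambda>l j. xs l j + t * d2 l j) - P1 xs) / t = - \<eta> l0 * \<bar>x0\<bar>"
        using t by simp
      have "P2 (\<lambda>l j. xs l j + t * d2 l j) - P2 xs
          = \<gamma> l0 * trimmed (K l0) (n l0) 1 (\<lambda>j. xs l0 j + t * d2 l0 j) - \<gamma> l0 * trimmed (K l0) (n l0) 1 (xs l0)"
        unfolding P2_def using l0 same by (intro sum_diff_single) auto
      also have "\<dots> \<le> \<gamma> l0 * (- t * \<bar>x0\<bar>)"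
      proof -
        have T1: "trimmed (K l0) (n l0) 1 (\<lambda>j. xs l0 j + t * d2 l0 j)
            \<le> (\<Sum>i\<in>\<Lambda>. block_norm 1 (\<lambda>j. xs l0 j + t * d2 l0 j) i)"
          using act(1,2) by (rule trimmed_le)
        have D1: "(\<Sum>i\<in>\<Lambda>. block_norm 1 (\<lambda>j. xs l0 j + t * d2 l0 j) i) - (\<Sum>i\<in>\<Lambda>. block_norm 1 (xs l0) i)
            = \<bar>xs l0 j + t * - x0\<bar> - \<bar>xs l0 j\<bar>"
          unfolding bn1
          using sum_diff_single[of \<Lambda> j "\<lambda>i. \<bar>xs l0 i + t * d2 l0 i\<bar>" "\<lambda>i. \<bar>xs l0 i\<bar>"] finL j(1)
          by (simp add: d2_def)
        have h: "xs l0 j + t * - x0 = (1 - t) * x0" by (simp add: x0_def algebra_simps)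
        have hx: "\<bar>xs l0 j + t * - x0\<bar> = (1 - t) * \<bar>x0\<bar>" unfolding h abs_mult using t by simp
        have hx2: "(1 - t) * \<bar>x0\<bar> = \<bar>x0\<bar> - t * \<bar>x0\<bar>" by (simp add: algebra_simps)
        have "trimmed (K l0) (n l0) 1 (\<lambda>j. xs l0 j + t * d2 l0 j) - trimmed (K l0) (n l0) 1 (xs l0)
            \<le> - t * \<bar>x0\<bar>"
          using T1 D1 hx hx2 act(3) unfolding x0_def by linarith
        moreover have "\<gamma> l0 > 0" using hyp1 l0 by auto
        ultimately show ?thesis
          by (metis mult_left_mono less_imp_le right_diff_distrib mult_minus_right)
      qed
      finally have e2: "(P2 (\<lambda>l j. xs l j + t * d2 l j) - P2 xs) / t \<le> - \<gamma> l0 * \<bar>x0\<bar>"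
        using t by (simp add: field_simps)
      show ?thesis using e1 e2 by (simp add: algebra_simps)
    qed
    have k2: "0 \<le> (\<Sum>i<q. r0 i * Sd d2 i) + - (\<eta> l0 + \<gamma> l0) * \<bar>x0\<bar>"
      by (rule key) (use c2 in auto)
    have Sd2: "Sd d2 i = - x0 * A l0 i j" for i
    proof -
      have "Sd d2 i = mv (A l0) (n l0) (d2 l0) i"
        unfolding Sd_def using l0 by (intro sum_single) (auto simp: d2_def mv_def)
      also have "\<dots> = - x0 * A l0 i j" unfolding mv_def d2_def using jn
        by (simp add: if_distrib cong: if_cong)
      finally show ?thesis .
    qed
    have "(\<Sum>i<q. r0 i * Sd d2 i) \<le> vnorm2 q r0 * vnorm2 q (Sd d2)" by (rule cs)
    also have "vnorm2 q (Sd d2) = \<bar>x0\<bar> * vnorm2 q (\<lambda>i. A l0 i j)"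
      unfolding Sd2 using vnorm2_scale[of q "- x0" "\<lambda>i. A l0 i j"] by simp
    also have "vnorm2 q (\<lambda>i. A l0 i j) \<le> Mx" unfolding Mx_def using jn by (intro Max_ge) auto
    hence "vnorm2 q r0 * (\<bar>x0\<bar> * vnorm2 q (\<lambda>i. A l0 i j)) \<le> vnorm2 q b * (\<bar>x0\<bar> * Mx)"
      using rb by (intro mult_mono mult_left_mono) (auto simp: vnorm2_nonneg)
    finally have "(\<Sum>i<q. r0 i * Sd d2 i) \<le> \<bar>x0\<bar> * (Mx * vnorm2 q b)" by (simp add: mult_ac)
    with k2 have "0 \<le> \<bar>x0\<bar> * (Mx * vnorm2 q b - \<eta> l0 - \<gamma> l0)" by (simp add: algebra_simps)
    moreover have "Mx * vnorm2 q b - \<eta> l0 - \<gamma> l0 < 0" using hyp2 l0 unfolding Mx_def by auto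
    moreover have "\<bar>x0\<bar> > 0" using j(2) unfolding x0_def by simp
    ultimately have "\<bar>x0\<bar> * (Mx * vnorm2 q b - \<eta> l0 - \<gamma> l0) < 0"
      using mult_pos_neg by blast
    with \<open>0 \<le> \<bar>x0\<bar> * (Mx * vnorm2 q b - \<eta> l0 - \<gamma> l0)\<close> show False by linarith
  qed
qed

lemma partA:
  fixes L :: nat and n :: "nat \<Rightarrow> nat" and \<gamma> :: "nat \<Rightarrow> real" and K :: "nat \<Rightarrow> nat"
    and m p :: "nat \<Rightarrow> nat" and D :: "nat \<Rightarrow> nat \<Rightarrow> nat \<Rightarrow> real" and c xbar :: "nat \<Rightarrow> nat \<Rightarrow> real"
    and q :: nat and A :: "nat \<Rightarrow> nat \<Rightarrow> nat \<Rightarrow> real" and b :: "nat \<Rightarrow> real" and xs :: "nat \<Rightarrow> nat \<Rightarrow> real"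
  assumes h1: "\<forall>l\<in>{1..L}. \<gamma> l > 0 \<and> K l < m l \<and> mat_nonzero {..<m l * p l} (n l) (D l)"
    and h2: "\<forall>l\<in>{1..L}. \<forall>r<m l * p l. mv (D l) (n l) (xbar l) r = c l r"
    and h3: "\<forall>l\<in>{1..L}. \<gamma> l > (1 / sigmaK (K l) (m l) (p l) (n l) (D l)) * spec_norm {..<q} (n l) (A l)
                 * vnorm2 q (\<lambda>i. b i - (\<Sum>k\<in>{1..L}. mv (A k) (n k) (xbar k) i))"
    and stat: "d_stationary
       (\<lambda>x. (1/2) * (vnorm2 q (\<lambda>i. b i - (\<Sum>l\<le>L. mv (A l) (n l) (x l) i)))\<^sup>2
            + (\<Sum>l\<in>{1..L}. \<gamma> l * trimmed (K l) (m l) (p l) (\<lambda>i. mv (D l) (n l) (x l) i - c l i)))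
       xs"
  shows "\<forall>l\<in>{1..L}. trimmed (K l) (m l) (p l) (\<lambda>i. mv (D l) (n l) (xs l) i - c l i) = 0"
proof -
  define Q where "Q x = (1/2) * (vnorm2 q (\<lambda>i. b i - (\<Sum>l\<le>L. mv (A l) (n l) (x l) i)))\<^sup>2" for x
  define P where "P x = (\<Sum>l\<in>{1..L}. \<gamma> l * trimmed (K l) (m l) (p l) (\<lambda>i. mv (D l) (n l) (x l) i - c l i))" for x
  define r0 where "r0 i = (\<Sum>l\<le>L. mv (A l) (n l) (xs l) i) - b i" for i
  define Sd where "Sd d i = (\<Sum>l\<le>L. mv (A l) (n l) (d l) i)" for d i
  define u where "u i = b i - (\<Sum>k\<in>{1..L}. mv (A k) (n k) (xbar k) i)" for i
  define z where "z l i = mv (D l) (n l) (xs l) i - c l i" for l i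
  have st: "\<exists>D. ((\<lambda>t. ((Q (\<lambda>l j. xs l j + t * d l j) + P (\<lambda>l j. xs l j + t * d l j))
                  - (Q xs + P xs)) / t) \<longlongrightarrow> D) (at_right 0) \<and> D \<ge> 0" for d
    using stat unfolding d_stationary_def Q_def P_def by blast
  have key: "0 \<le> (\<Sum>i<q. r0 i * Sd d i) + cc"
    if cb: "\<And>t. 0 < t \<Longrightarrow> t < 1 \<Longrightarrow> (P (\<lambda>l j. xs l j + t * d l j) - P xs) / t \<le> cc"
    for d cc
  proof -
    obtain DD where DD: "((\<lambda>t. ((Q (\<lambda>l j. xs l j + t * d l j) + P (\<lambda>l j. xs l j + t * d l j))
                  - (Q xs + P xs)) / t) \<longlongrightarrow> DD) (at_right 0)" "DD \<ge> 0" using st by blast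
    have "DD \<le> (\<Sum>i<q. r0 i * Sd d i) + cc"
    proof (rule dir_bound[where F = "\<lambda>x. Q x + P x" and B = "(1/2) * (\<Sum>i<q. (Sd d i)\<^sup>2)"])
      show "((\<lambda>t. (Q (\<lambda>l j. xs l j + t * d l j) + P (\<lambda>l j. xs l j + t * d l j)
              - (Q xs + P xs)) / t) \<longlongrightarrow> DD) (at_right 0)" by (rule DD(1))
      fix t :: real assume t: "0 < t" "t < 1"
      have qd: "(Q (\<lambda>l j. xs l j + t * d l j) - Q xs) / t = (\<Sum>i<q. r0 i * Sd d i) + t * ((1/2) * (\<Sum>i<q. (Sd d i)\<^sup>2))"
        unfolding Q_def r0_def Sd_def
        using quad_step[where t=t and q=q and b=b and I="{..L}" and A=A and n=n and x=xs and d=d] t by simp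
      have "(Q (\<lambda>l j. xs l j + t * d l j) + P (\<lambda>l j. xs l j + t * d l j) - (Q xs + P xs)) / t
          = (Q (\<lambda>l j. xs l j + t * d l j) - Q xs) / t + (P (\<lambda>l j. xs l j + t * d l j) - P xs) / t"
        by (simp add: diff_divide_distrib add_divide_distrib)
      also have "\<dots> \<le> (\<Sum>i<q. r0 i * Sd d i) + t * ((1/2) * (\<Sum>i<q. (Sd d i)\<^sup>2)) + cc"
        using qd cb[OF t] by simp
      finally show "(Q (\<lambda>l j. xs l j + t * d l j) + P (\<lambda>l j. xs l j + t * d l j) - (Q xs + P xs)) / t
          \<le> (\<Sum>i<q. r0 i * Sd d i) + cc + t * ((1/2) * (\<Sum>i<q. (Sd d i)\<^sup>2))" by simp
    qed
    thus ?thesis using DD(2) by simp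
  qed
  have Pnn: "P xs \<ge> 0" unfolding P_def using h1 by (auto intro!: sum_nonneg mult_nonneg_nonneg simp: trimmed_nonneg)
  have rb: "vnorm2 q r0 \<le> vnorm2 q u"
  proof -
    define d1 where "d1 l j = (if l = 0 then 0 else xbar l j) - xs l j" for l j
    have c1: "(P (\<lambda>l j. xs l j + t * d1 l j) - P xs) / t \<le> 0" if t: "0 < t" "t < 1" for t
    proof -
      have "P (\<lambda>l j. xs l j + t * d1 l j) \<le> (\<Sum>l\<in>{1..L}. \<gamma> l * ((1 - t) * trimmed (K l) (m l) (p l) (z l)))"
        unfolding P_def
      proof (intro sum_mono mult_left_mono)
        fix l assume l: "l \<in> {1..L}"
        obtain \<Lambda> where act: "\<Lambda> \<subseteq> {..<m l}" "card \<Lambda> = m l - K l"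
          "trimmed (K l) (m l) (p l) (z l) = (\<Sum>i\<in>\<Lambda>. block_norm (p l) (z l) i)"
          using trimmed_obtain by blast
        have sc: "mv (D l) (n l) (\<lambda>j. xs l j + t * d1 l j) (i * p l + r) - c l (i * p l + r)
                = (1 - t) * z l (i * p l + r)" if "i \<in> \<Lambda>" "r < p l" for i r
        proof -
          have rr: "i * p l + r < m l * p l" using block_rows_sub[OF act(1), of "p l"] block_rows_mem[OF that] by auto
          have "d1 l = (\<lambda>j. xbar l j - xs l j)" using l unfolding d1_def by auto
          hence "mv (D l) (n l) (\<lambda>j. xs l j + t * d1 l j) (i * p l + r)
              = mv (D l) (n l) (xs l) (i * p l + r) + t * (mv (D l) (n l) (xbar l) (i * p l + r) - mv (D l) (n l) (xs l) (i * p l + r))"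
            by (simp add: mv_lin mv_diff)
          also have "mv (D l) (n l) (xbar l) (i * p l + r) = c l (i * p l + r)" using h2 l rr by blast
          finally show ?thesis unfolding z_def by (simp add: algebra_simps)
        qed
        show "trimmed (K l) (m l) (p l) (\<lambda>i. mv (D l) (n l) (\<lambda>j. xs l j + t * d1 l j) i - c l i)
            \<le> (1 - t) * trimmed (K l) (m l) (p l) (z l)"
          by (rule trimmed_shrink[OF act]) (use sc t in auto)
        have "0 < \<gamma> l" using h1 l by blast
        thus "0 \<le> \<gamma> l" by simp
      qed
      also have "\<dots> = (1 - t) * P xs" unfolding P_def z_def by (simp add: sum_distrib_left mult_ac)
      finally have "(P (\<lambda>l j. xs l j + t * d1 l j) - P xs) / t \<le> - P xs"
        using t by (simp add: field_simps)
      thus ?thesis using Pnn by simp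
    qed
    have "0 \<le> (\<Sum>i<q. r0 i * Sd d1 i) + 0" by (rule key) (use c1 in auto)
    moreover have "Sd d1 i = - (r0 i + u i)" for i
    proof -
      have e1: "mv (A l) (n l) (d1 l) i = mv (A l) (n l) (\<lambda>j. if l = 0 then 0 else xbar l j) i - mv (A l) (n l) (xs l) i" for l
        unfolding d1_def by (simp add: mv_diff)
      have e2: "(\<Sum>l\<le>L. mv (A l) (n l) (\<lambda>j. if l = 0 then 0 else xbar l j) i) = (\<Sum>l\<in>{1..L}. mv (A l) (n l) (xbar l) i)"
      proof -
        have "{..L} = insert 0 {1..L}" by auto
        hence "(\<Sum>l\<le>L. mv (A l) (n l) (\<lambda>j. if l = 0 then 0 else xbar l j) i)
            = mv (A 0) (n 0) (\<lambda>j. 0) i + (\<Sum>l\<in>{1..L}. mv (A l) (n l) (\<lambda>j. if l = 0 then 0 else xbar l j) i)"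
          by simp
        also have "(\<Sum>l\<in>{1..L}. mv (A l) (n l) (\<lambda>j. if l = 0 then 0 else xbar l j) i) = (\<Sum>l\<in>{1..L}. mv (A l) (n l) (xbar l) i)"
          by (intro sum.cong) auto
        finally show ?thesis by (simp add: mv_zero)
      qed
      show ?thesis unfolding Sd_def e1 sum_subtractf e2 r0_def u_def by simp
    qed
    ultimately have h: "0 \<le> (\<Sum>i<q. r0 i * (- (r0 i + u i)))" by simp
    have "(\<Sum>i<q. r0 i * (- (r0 i + u i))) = - (\<Sum>i<q. r0 i * (r0 i + u i))"
      by (simp add: sum_negf[symmetric] algebra_simps)
    with h have "0 \<le> - (\<Sum>i<q. r0 i * (r0 i + u i))" by simp
    thus ?thesis by (rule res_bound)
  qed
  show ?thesis
  proof (rule ccontr)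
    assume "\<not> ?thesis"
    then obtain l0 where l0: "l0 \<in> {1..L}" and Tnz: "trimmed (K l0) (m l0) (p l0) (z l0) \<noteq> 0"
      unfolding z_def by blast
    define T where "T = trimmed (K l0) (m l0) (p l0) (z l0)"
    have Tpos: "T > 0" using Tnz trimmed_nonneg[of "K l0" "m l0" "p l0" "z l0"] unfolding T_def by simp
    obtain \<Lambda> where act: "\<Lambda> \<subseteq> {..<m l0}" "card \<Lambda> = m l0 - K l0"
      "trimmed (K l0) (m l0) (p l0) (z l0) = (\<Sum>i\<in>\<Lambda>. block_norm (p l0) (z l0) i)"
      using trimmed_obtain by blast
    have finL: "finite \<Lambda>" using act(1) finite_subset by blast
    define Rw where "Rw = block_rows (p l0) \<Lambda>"
    have Rwsub: "Rw \<subseteq> {..<m l0 * p l0}" unfolding Rw_def by (rule block_rows_sub[OF act(1)])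
    have finRw: "finite Rw" unfolding Rw_def using finL by (rule block_rows_finite)
    have mnz: "mat_nonzero {..<m l0 * p l0} (n l0) (D l0)" using h1 l0 by blast
    have npos: "n l0 > 0" using mnz unfolding mat_nonzero_def by auto
    define \<sigma> where "\<sigma> = sigmaK (K l0) (m l0) (p l0) (n l0) (D l0)"
    have zRw: "z l0 r = mv (D l0) (n l0) (xs l0) r - mv (D l0) (n l0) (xbar l0) r" if "r \<in> Rw" for r
      using h2 l0 Rwsub that unfolding z_def by auto
    have zsum: "(\<Sum>r\<in>Rw. (z l0 r)\<^sup>2) \<le> T\<^sup>2"
    proof -
      have "(\<Sum>r\<in>Rw. (z l0 r)\<^sup>2) = (\<Sum>i\<in>\<Lambda>. (block_norm (p l0) (z l0) i)\<^sup>2)"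
        unfolding Rw_def by (rule block_rows_sum[OF finL])
      also have "\<dots> \<le> (\<Sum>i\<in>\<Lambda>. block_norm (p l0) (z l0) i)\<^sup>2"
        using finL by (intro sum_sq_le_sq_sum) (auto simp: block_norm_nonneg)
      finally show ?thesis using act(3) unfolding T_def by simp
    qed
    obtain d where dD: "\<forall>r\<in>Rw. mv (D l0) (n l0) d r = - z l0 r"
      and dn: "\<sigma>\<^sup>2 * ip (n l0) d d \<le> (\<Sum>r\<in>Rw. (z l0 r)\<^sup>2)" and spos: "\<sigma> > 0"
    proof (cases "surjective_mat {..<m l0 * p l0} (n l0) (D l0)")
      case True
      hence sig: "\<sigma> = sigma_min {..<m l0 * p l0} (n l0) (D l0)" unfolding \<sigma>_def sigmaK_def by simp
      define y where "y r = (if r \<in> Rw then - z l0 r else 0)" for r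
      obtain x0 where x0: "\<forall>r\<in>{..<m l0 * p l0}. mv (D l0) (n l0) x0 r = y r"
        using True unfolding surjective_mat_def by blast
      obtain d where d: "\<forall>r\<in>{..<m l0 * p l0}. mv (D l0) (n l0) d r = mv (D l0) (n l0) x0 r"
        "(sigma_min {..<m l0 * p l0} (n l0) (D l0))\<^sup>2 * ip (n l0) d d \<le> (\<Sum>r\<in>{..<m l0 * p l0}. (mv (D l0) (n l0) d r)\<^sup>2)"
        using sv_facts(5)[OF npos, of "{..<m l0 * p l0}" "D l0" x0] by auto
      have md: "mv (D l0) (n l0) d r = y r" if "r < m l0 * p l0" for r using d(1) x0 that by simp
      have "(\<Sum>r\<in>{..<m l0 * p l0}. (mv (D l0) (n l0) d r)\<^sup>2) = (\<Sum>r\<in>{..<m l0 * p l0}. (y r)\<^sup>2)"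
        using md by (intro sum.cong) auto
      also have "\<dots> = (\<Sum>r\<in>Rw. (y r)\<^sup>2)"
        using Rwsub by (intro sum.mono_neutral_right) (auto simp: y_def)
      also have "\<dots> = (\<Sum>r\<in>Rw. (z l0 r)\<^sup>2)" by (intro sum.cong) (auto simp: y_def)
      finally have "\<sigma>\<^sup>2 * ip (n l0) d d \<le> (\<Sum>r\<in>Rw. (z l0 r)\<^sup>2)" using d(2) sig by simp
      moreover have "\<forall>r\<in>Rw. mv (D l0) (n l0) d r = - z l0 r" using md Rwsub by (auto simp: y_def)
      moreover have "\<sigma> > 0" using sv_facts(4)[OF npos, of "{..<m l0 * p l0}" "D l0"] mnz sig by simp
      ultimately show ?thesis using that by blast
    next
      case False
      define W where "W = {sigma_min (block_rows (p l0) \<Lambda>') (n l0) (D l0) | \<Lambda>'.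
                  \<Lambda>' \<subseteq> {..<m l0} \<and> card \<Lambda>' = m l0 - K l0 \<and> mat_nonzero (block_rows (p l0) \<Lambda>') (n l0) (D l0)}"
      have sig: "\<sigma> = Min W" unfolding \<sigma>_def sigmaK_def W_def using False by simp
      have mnzR: "mat_nonzero Rw (n l0) (D l0)"
      proof (rule ccontr)
        assume nz: "\<not> mat_nonzero Rw (n l0) (D l0)"
        have "z l0 r = 0" if r: "r \<in> Rw" for r
        proof -
          have "\<forall>j<n l0. D l0 r j = 0" using nz r unfolding mat_nonzero_def by blast
          hence "mv (D l0) (n l0) v r = 0" for v unfolding mv_def by simp
          thus ?thesis using zRw[OF r] by simp
        qed
        hence "block_norm (p l0) (z l0) i = 0" if "i \<in> \<Lambda>" for i
          unfolding block_norm_def using block_rows_mem[OF that] unfolding Rw_def by simp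
        hence "T = 0" using act(3) unfolding T_def by simp
        thus False using Tpos by simp
      qed
      have finW: "finite W"
      proof -
        have "W \<subseteq> (\<lambda>\<Lambda>'. sigma_min (block_rows (p l0) \<Lambda>') (n l0) (D l0)) ` Pow {..<m l0}"
          unfolding W_def by auto
        thus ?thesis by (rule finite_subset) simp
      qed
      have inW: "sigma_min Rw (n l0) (D l0) \<in> W" unfolding W_def Rw_def
        using act(1,2) mnzR unfolding Rw_def by blast
      have Wpos: "\<forall>w\<in>W. w > 0"
      proof
        fix w assume "w \<in> W"
        then obtain \<Lambda>' where "w = sigma_min (block_rows (p l0) \<Lambda>') (n l0) (D l0)" "\<Lambda>' \<subseteq> {..<m l0}"
          "mat_nonzero (block_rows (p l0) \<Lambda>') (n l0) (D l0)" unfolding W_def by blast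
        moreover have "finite (block_rows (p l0) \<Lambda>')"
          using \<open>\<Lambda>' \<subseteq> {..<m l0}\<close> by (intro block_rows_finite) (rule finite_subset, auto)
        ultimately show "w > 0" using sv_facts(4)[OF npos] by blast
      qed
      have "Min W \<in> W" using Min_in[OF finW] inW by blast
      hence spos: "\<sigma> > 0" using sig Wpos by auto
      have sle: "\<sigma> \<le> sigma_min Rw (n l0) (D l0)" using sig finW inW by simp
      obtain d where d: "\<forall>r\<in>Rw. mv (D l0) (n l0) d r = mv (D l0) (n l0) (\<lambda>j. xbar l0 j - xs l0 j) r"
        "(sigma_min Rw (n l0) (D l0))\<^sup>2 * ip (n l0) d d \<le> (\<Sum>r\<in>Rw. (mv (D l0) (n l0) d r)\<^sup>2)"
        using sv_facts(5)[OF npos finRw, of "D l0" "\<lambda>j. xbar l0 j - xs l0 j"] by auto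
      have md: "mv (D l0) (n l0) d r = - z l0 r" if "r \<in> Rw" for r
        using d(1) zRw[OF that] that by (simp add: mv_diff)
      have "\<sigma>\<^sup>2 * ip (n l0) d d \<le> (sigma_min Rw (n l0) (D l0))\<^sup>2 * ip (n l0) d d"
        using sle spos ip_self_nonneg[of "n l0" d] by (intro mult_right_mono power_mono) auto
      also have "\<dots> \<le> (\<Sum>r\<in>Rw. (mv (D l0) (n l0) d r)\<^sup>2)" by (rule d(2))
      also have "\<dots> = (\<Sum>r\<in>Rw. (z l0 r)\<^sup>2)" using md by (intro sum.cong) auto
      finally show ?thesis using that md spos by blast
    qed
    define nd where "nd = sqrt (ip (n l0) d d)"
    have nd0: "nd \<ge> 0" unfolding nd_def using ip_self_nonneg[of "n l0" d] by simp
    have sdT: "\<sigma> * nd \<le> T"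
    proof -
      have "(\<sigma> * nd)\<^sup>2 = \<sigma>\<^sup>2 * ip (n l0) d d" unfolding nd_def using ip_self_nonneg
        by (simp add: power_mult_distrib)
      also have "\<dots> \<le> T\<^sup>2" using dn zsum by linarith
      finally show ?thesis using Tpos by (simp add: power2_le_iff_abs_le)
    qed
    define dd where "dd l j = (if l = l0 then d j else 0)" for l j
    have c2: "(P (\<lambda>l j. xs l j + t * dd l j) - P xs) / t \<le> - \<gamma> l0 * T" if t: "0 < t" "t < 1" for t
    proof -
      have "P (\<lambda>l j. xs l j + t * dd l j) - P xs
          = \<gamma> l0 * trimmed (K l0) (m l0) (p l0) (\<lambda>i. mv (D l0) (n l0) (\<lambda>j. xs l0 j + t * dd l0 j) i - c l0 i)
            - \<gamma> l0 * trimmed (K l0) (m l0) (p l0) (\<lambda>i. mv (D l0) (n l0) (xs l0) i - c l0 i)"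
        unfolding P_def using l0 by (intro sum_diff_single) (auto simp: dd_def)
      also have "\<dots> \<le> \<gamma> l0 * ((1 - t) * T) - \<gamma> l0 * T"
      proof -
        have "trimmed (K l0) (m l0) (p l0) (\<lambda>i. mv (D l0) (n l0) (\<lambda>j. xs l0 j + t * dd l0 j) i - c l0 i)
            \<le> (1 - t) * trimmed (K l0) (m l0) (p l0) (z l0)"
        proof (rule trimmed_shrink[OF act])
          fix i r assume "i \<in> \<Lambda>" "r < p l0"
          hence rr: "i * p l0 + r \<in> Rw" unfolding Rw_def by (rule block_rows_mem)
          have "dd l0 = d" unfolding dd_def by auto
          hence "mv (D l0) (n l0) (\<lambda>j. xs l0 j + t * dd l0 j) (i * p l0 + r)
             = mv (D l0) (n l0) (xs l0) (i * p l0 + r) + t * (- z l0 (i * p l0 + r))"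
            using dD rr by (simp add: mv_lin)
          thus "mv (D l0) (n l0) (\<lambda>j. xs l0 j + t * dd l0 j) (i * p l0 + r) - c l0 (i * p l0 + r)
              = (1 - t) * z l0 (i * p l0 + r)" unfolding z_def by (simp add: algebra_simps)
        qed (use t in simp)
        moreover have "\<gamma> l0 > 0" using h1 l0 by blast
        ultimately show ?thesis unfolding T_def z_def
          by (simp add: mult_left_mono)
      qed
      finally have "P (\<lambda>l j. xs l j + t * dd l j) - P xs \<le> t * (- \<gamma> l0 * T)" by (simp add: algebra_simps)
      thus ?thesis using t by (simp add: divide_le_eq mult.commute)
    qed
    have k2: "0 \<le> (\<Sum>i<q. r0 i * Sd dd i) + - \<gamma> l0 * T" by (rule key) (use c2 in auto)
    have Sdd: "Sd dd i = mv (A l0) (n l0) d i" for i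
    proof -
      have "Sd dd i = mv (A l0) (n l0) (dd l0) i"
        unfolding Sd_def using l0 by (intro sum_single) (auto simp: dd_def mv_def)
      thus ?thesis unfolding dd_def by simp
    qed
    define sp where "sp = spec_norm {..<q} (n l0) (A l0)"
    have sp0: "sp \<ge> 0" unfolding sp_def using sv_facts(2)[OF npos, of "{..<q}" "A l0"] by simp
    have nA: "vnorm2 q (Sd dd) \<le> sp * nd"
    proof -
      have "(vnorm2 q (Sd dd))\<^sup>2 = (\<Sum>i<q. (mv (A l0) (n l0) d i)\<^sup>2)" unfolding vnorm2_sq Sdd ..
      also have "\<dots> \<le> sp\<^sup>2 * ip (n l0) d d" unfolding sp_def
        using sv_facts(3)[OF npos, of "{..<q}" "A l0" d] by simp
      also have "\<dots> = (sp * nd)\<^sup>2" unfolding nd_def using ip_self_nonneg by (simp add: power_mult_distrib)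
      finally show ?thesis using sp0 nd0 by (simp add: power2_le_iff_abs_le)
    qed
    have "(\<Sum>i<q. r0 i * Sd dd i) \<le> vnorm2 q r0 * vnorm2 q (Sd dd)" by (rule cs)
    also have "\<dots> \<le> vnorm2 q u * (sp * nd)"
      using rb nA by (intro mult_mono) (auto simp: vnorm2_nonneg)
    finally have "\<gamma> l0 * T \<le> vnorm2 q u * sp * nd" using k2 by (simp add: mult_ac)
    moreover have "\<gamma> l0 > (1 / \<sigma>) * sp * vnorm2 q u"
      using h3 l0 unfolding \<sigma>_def sp_def u_def by blast
    ultimately have "(1 / \<sigma>) * sp * vnorm2 q u * T < vnorm2 q u * sp * nd"
    proof -
      assume a1: "\<gamma> l0 * T \<le> vnorm2 q u * sp * nd" and a2: "\<gamma> l0 > (1 / \<sigma>) * sp * vnorm2 q u"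
      have "(1 / \<sigma>) * sp * vnorm2 q u * T < \<gamma> l0 * T" using a2 Tpos by (rule mult_strict_right_mono)
      thus ?thesis using a1 by linarith
    qed
    hence "sp * vnorm2 q u * T < sp * vnorm2 q u * (\<sigma> * nd)"
      using spos by (simp add: field_simps)
    moreover have "sp * vnorm2 q u * (\<sigma> * nd) \<le> sp * vnorm2 q u * T"
      using sdT sp0 vnorm2_nonneg[of q u] by (intro mult_left_mono) auto
    ultimately show False by simp
  qed
qed

theorem mainTheorem7:
  fixes L :: nat and n :: "nat \<Rightarrow> nat" and \<gamma> :: "nat \<Rightarrow> real" and K :: "nat \<Rightarrow> nat"
  shows
  "(\<forall>(m :: nat \<Rightarrow> nat) (p :: nat \<Rightarrow> nat) (D :: nat \<Rightarrow> nat \<Rightarrow> nat \<Rightarrow> real)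
       (c :: nat \<Rightarrow> nat \<Rightarrow> real) (xbar :: nat \<Rightarrow> nat \<Rightarrow> real) (q :: nat)
       (A :: nat \<Rightarrow> nat \<Rightarrow> nat \<Rightarrow> real) (b :: nat \<Rightarrow> real) (xs :: nat \<Rightarrow> nat \<Rightarrow> real).
     (\<forall>l\<in>{1..L}. \<gamma> l > 0 \<and> K l < m l \<and> mat_nonzero {..<m l * p l} (n l) (D l)) \<longrightarrow>
     (\<forall>l\<in>{1..L}. \<forall>r<m l * p l. mv (D l) (n l) (xbar l) r = c l r) \<longrightarrow>
     (\<forall>l\<in>{1..L}. \<gamma> l > (1 / sigmaK (K l) (m l) (p l) (n l) (D l)) * spec_norm {..<q} (n l) (A l)
                 * vnorm2 q (\<lambda>i. b i - (\<Sum>k\<in>{1..L}. mv (A k) (n k) (xbar k) i))) \<longrightarrow>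
     d_stationary
       (\<lambda>x. (1/2) * (vnorm2 q (\<lambda>i. b i - (\<Sum>l\<le>L. mv (A l) (n l) (x l) i)))\<^sup>2
            + (\<Sum>l\<in>{1..L}. \<gamma> l * trimmed (K l) (m l) (p l) (\<lambda>i. mv (D l) (n l) (x l) i - c l i)))
       xs \<longrightarrow>
     (\<forall>l\<in>{1..L}. trimmed (K l) (m l) (p l) (\<lambda>i. mv (D l) (n l) (xs l) i - c l i) = 0))
   \<and>
   (\<forall>(q :: nat) (A :: nat \<Rightarrow> nat \<Rightarrow> nat \<Rightarrow> real) (b :: nat \<Rightarrow> real) (\<eta> :: nat \<Rightarrow> real)
       (xs :: nat \<Rightarrow> nat \<Rightarrow> real).
     n 0 = 0 \<longrightarrow>
     (\<forall>l\<in>{1..L}. \<gamma> l > 0 \<and> K l < n l \<and> \<eta> l \<ge> 0) \<longrightarrow>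
     (\<forall>l\<in>{1..L}. \<gamma> l > Max ((\<lambda>j. vnorm2 q (\<lambda>i. A l i j)) ` {..<n l}) * vnorm2 q b - \<eta> l) \<longrightarrow>
     d_stationary
       (\<lambda>x. (1/2) * (vnorm2 q (\<lambda>i. b i - (\<Sum>l\<in>{1..L}. mv (A l) (n l) (x l) i)))\<^sup>2
            + (\<Sum>l\<in>{1..L}. \<eta> l * vnorm1 (n l) (x l))
            + (\<Sum>l\<in>{1..L}. \<gamma> l * trimmed (K l) (n l) 1 (x l)))
       xs \<longrightarrow>
     (\<forall>l\<in>{1..L}. trimmed (K l) (n l) 1 (xs l) = 0))"
  apply (intro conjI allI impI)
   apply (rule partA; assumption)
  apply (rule partB; assumption)
  done

end
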